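(* Fix an integer $n\ge 1$. For every formula $\varphi$ of NM logic in the variables $x_1,\dots,x_n$, $\chi^+([\varphi]_\equiv)$ equals the number of assignments $\mu$ of $x_1,\dots,x_n$ to values in $\{0,\tfrac12,1\}$ such that $\varphi$ evaluates to $1$ in the three-element NM chain $\{0,\tfrac12,1\}$ under $\mu$; i.e. the number of tuples $(a_1,\dots,a_n)\in\{0,\tfrac12,1\}^n$ with $\varphi(a_1,\dots,a_n)=1$.
   Context: An NM algebra is an algebra $\langle A,\wedge,\vee,\odot,\to,\bot,\top\rangle$ such that $(A,\wedge,\vee,\bot,\top)$ is a bounded lattice, $\langle A,\odot,\top\rangle$ is a commutative monoid, and for all $x,y,z$: $x\odot y\le z$ iff $x\le y\to z$; $(x\to y)\vee(y\to x)=\top$; $\neg(x\odot y)\vee((x\wedge y)\to(x\odot y))=\top$ where $\neg x:=x\to\bot$; and $\neg\neg x=x$. The standard NM algebra is $[0,1]$ with $\wedge=\min$, $\vee=\max$, $x\odot y=\min(x,y)$ if $x+y>1$ and $0$ otherwise, $x\to y=1$ if $x\le y$ and $\max(1-x,y)$ otherwise; $\{0,\tfrac12,1\}$ is a subalgebra. $\mathcal{NM}_n$ is the free NM algebra on $n$ generators, i.e. the Lindenbaum algebra of formulas in $x_1,\dots,x_n$ modulo logical equivalence $\equiv$; $[\varphi]_\equiv$ is the class of $\varphi$. It is a finite distributive lattice. A valuation on a distributive lattice $L$ is a map $\nu:L\to\mathbb{R}$ with $\nu(x)+\nu(y)=\nu(x\vee y)+\nu(x\wedge y)$; on a finite distributive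 lattice a valuation is uniquely determined by its values on join-irreducible elements and on $\bot$. An element is join-irreducible if it is not $\bot$ and $x=y\vee z$ implies $x=y$ or $x=z$. The idempotent Euler characteristic $\chi^+:\mathcal{NM}_n\to\mathbb{R}$ is the unique valuation with $\chi^+(\bot)=0$ and, for each join-irreducible $g$, $\chi^+(g)=1$ if $g\odot g=g$ and $\chi^+(g)=0$ otherwise. *)

theory Defs
  imports Complex_Main "HOL-Library.FuncSet"
begin

text \<open>Variables x_1, ..., x_n are represented as Var 0, ..., Var (n-1).\<close>

datatype form =
    Var nat
  | Bot
  | Top
  | And form form      (* lattice meet *)
  | Or form form
  | Conj form form     (* monoidal operation (strong conjunction) *)
  | Imp form form

fun vars :: "form \<Rightarrow> nat set" where
  "vars (Var i) = {i}"
| "vars Bot = {}"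
| "vars Top = {}"
| "vars (And a b) = vars a \<union> vars b"
| "vars (Or a b) = vars a \<union> vars b"
| "vars (Conj a b) = vars a \<union> vars b"
| "vars (Imp a b) = vars a \<union> vars b"

definition Fm :: "nat \<Rightarrow> form set" where
  "Fm n = {\<phi>. vars \<phi> \<subseteq> {..<n}}"

definition nm_algebra ::
  "'a set \<Rightarrow> ('a \<Rightarrow> 'a \<Rightarrow> 'a) \<Rightarrow> ('a \<Rightarrow> 'a \<Rightarrow> 'a) \<Rightarrow> ('a \<Rightarrow> 'a \<Rightarrow> 'a)
     \<Rightarrow> ('a \<Rightarrow> 'a \<Rightarrow> 'a) \<Rightarrow> 'a \<Rightarrow> 'a \<Rightarrow> bool" where
  "nm_algebra A mt jn cj im bt tp \<longleftrightarrow>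
     bt \<in> A \<and> tp \<in> A \<and>
     (\<forall>x\<in>A. \<forall>y\<in>A. mt x y \<in> A \<and> jn x y \<in> A \<and> cj x y \<in> A \<and> im x y \<in> A) \<and>
     \<comment> \<open>bounded lattice\<close>
     (\<forall>x\<in>A. \<forall>y\<in>A. mt x y = mt y x \<and> jn x y = jn y x) \<and>
     (\<forall>x\<in>A. \<forall>y\<in>A. \<forall>z\<in>A. mt x (mt y z) = mt (mt x y) z \<and> jn x (jn y z) = jn (jn x y) z) \<and>
     (\<forall>x\<in>A. \<forall>y\<in>A. mt x (jn x y) = x \<and> jn x (mt x y) = x) \<and>
     (\<forall>x\<in>A. jn x bt = x \<and> mt x tp = x) \<and>
     \<comment> \<open>commutative monoid\<close>
     (\<forall>x\<in>A. \<forall>y\<in>A. cj x y = cj y x) \<and>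
     (\<forall>x\<in>A. \<forall>y\<in>A. \<forall>z\<in>A. cj x (cj y z) = cj (cj x y) z) \<and>
     (\<forall>x\<in>A. cj x tp = x) \<and>
     \<comment> \<open>residuation, with x \<le> y meaning mt x y = x\<close>
     (\<forall>x\<in>A. \<forall>y\<in>A. \<forall>z\<in>A. (mt (cj x y) z = cj x y) \<longleftrightarrow> (mt x (im y z) = x)) \<and>
     \<comment> \<open>prelinearity\<close>
     (\<forall>x\<in>A. \<forall>y\<in>A. jn (im x y) (im y x) = tp) \<and>
     \<comment> \<open>NM axiom\<close>
     (\<forall>x\<in>A. \<forall>y\<in>A. jn (im (cj x y) bt) (im (mt x y) (cj x y)) = tp) \<and>
     \<comment> \<open>involution\<close>
     (\<forall>x\<in>A. im (im x bt) bt = x)"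

fun eval_alg ::
  "('a \<Rightarrow> 'a \<Rightarrow> 'a) \<Rightarrow> ('a \<Rightarrow> 'a \<Rightarrow> 'a) \<Rightarrow> ('a \<Rightarrow> 'a \<Rightarrow> 'a) \<Rightarrow> ('a \<Rightarrow> 'a \<Rightarrow> 'a)
     \<Rightarrow> 'a \<Rightarrow> 'a \<Rightarrow> (nat \<Rightarrow> 'a) \<Rightarrow> form \<Rightarrow> 'a" where
  "eval_alg mt jn cj im bt tp v (Var i) = v i"
| "eval_alg mt jn cj im bt tp v Bot = bt"
| "eval_alg mt jn cj im bt tp v Top = tp"
| "eval_alg mt jn cj im bt tp v (And a b) =
     mt (eval_alg mt jn cj im bt tp v a) (eval_alg mt jn cj im bt tp v b)"
| "eval_alg mt jn cj im bt tp v (Or a b) =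
     jn (eval_alg mt jn cj im bt tp v a) (eval_alg mt jn cj im bt tp v b)"
| "eval_alg mt jn cj im bt tp v (Conj a b) =
     cj (eval_alg mt jn cj im bt tp v a) (eval_alg mt jn cj im bt tp v b)"
| "eval_alg mt jn cj im bt tp v (Imp a b) =
     im (eval_alg mt jn cj im bt tp v a) (eval_alg mt jn cj im bt tp v b)"

text \<open>Carriers are taken to be subsets of nat (countable NM algebras), which suffices since
  the variety of NM algebras is generated by its countable (indeed finite) members.\<close>

definition nm_equiv :: "form \<Rightarrow> form \<Rightarrow> bool" (infix "\<equiv>\<^sub>N\<^sub>M" 50) where
  "\<phi> \<equiv>\<^sub>N\<^sub>M \<psi> \<longleftrightarrow>
     (\<forall>(A::nat set) mt jn cj im bt tp v. nm_algebra A mt jn cj im bt tp \<longrightarrow> (\<forall>i. v i \<in> A) \<longrightarrow>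
        eval_alg mt jn cj im bt tp v \<phi> = eval_alg mt jn cj im bt tp v \<psi>)"

definition cls :: "nat \<Rightarrow> form \<Rightarrow> form set" where
  "cls n \<phi> = {\<psi> \<in> Fm n. \<psi> \<equiv>\<^sub>N\<^sub>M \<phi>}"

definition NM_free :: "nat \<Rightarrow> form set set" where
  "NM_free n = cls n ` Fm n"

definition is_valuation :: "nat \<Rightarrow> (form set \<Rightarrow> real) \<Rightarrow> bool" where
  "is_valuation n \<nu> \<longleftrightarrow>
     (\<forall>\<phi>\<in>Fm n. \<forall>\<psi>\<in>Fm n.
        \<nu> (cls n \<phi>) + \<nu> (cls n \<psi>) = \<nu> (cls n (Or \<phi> \<psi>)) + \<nu> (cls n (And \<phi> \<psi>)))"

definition join_irreducible :: "nat \<Rightarrow> form set \<Rightarrow> bool" where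
  "join_irreducible n X \<longleftrightarrow>
     X \<in> NM_free n \<and> X \<noteq> cls n Bot \<and>
     (\<forall>\<psi>\<in>Fm n. \<forall>\<chi>\<in>Fm n. X = cls n (Or \<psi> \<chi>) \<longrightarrow> X = cls n \<psi> \<or> X = cls n \<chi>)"

definition idempotent_cls :: "nat \<Rightarrow> form set \<Rightarrow> bool" where
  "idempotent_cls n X \<longleftrightarrow> (\<exists>\<phi>\<in>Fm n. X = cls n \<phi> \<and> cls n (Conj \<phi> \<phi>) = X)"

text \<open>The idempotent Euler characteristic: the unique valuation with the prescribed values;
  as a function on form sets it is taken to be 0 outside NM_n, which makes it unique.\<close>

definition chi_plus :: "nat \<Rightarrow> form set \<Rightarrow> real" where
  "chi_plus n = (THE \<nu>. is_valuation n \<nu> \<and> \<nu> (cls n Bot) = 0 \<and>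
       (\<forall>X. join_irreducible n X \<longrightarrow> \<nu> X = (if idempotent_cls n X then 1 else 0)) \<and>
       (\<forall>X. X \<notin> NM_free n \<longrightarrow> \<nu> X = 0))"

definition std_conj :: "real \<Rightarrow> real \<Rightarrow> real" where
  "std_conj x y = (if x + y > 1 then min x y else 0)"

definition std_imp :: "real \<Rightarrow> real \<Rightarrow> real" where
  "std_imp x y = (if x \<le> y then 1 else max (1 - x) y)"

definition eval_std :: "(nat \<Rightarrow> real) \<Rightarrow> form \<Rightarrow> real" where
  "eval_std = eval_alg min max std_conj std_imp 0 1"

end

theory Submission
  imports Defs
begin


locale nmA =
  fixes A :: "'a set" and mt jn cj im :: "'a \<Rightarrow> 'a \<Rightarrow> 'a" and bt tp :: 'a
  assumes ax: "nm_algebra A mt jn cj im bt tp"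
begin

lemma axs:
  "bt \<in> A" "tp \<in> A"
  "\<forall>x\<in>A. \<forall>y\<in>A. mt x y \<in> A \<and> jn x y \<in> A \<and> cj x y \<in> A \<and> im x y \<in> A"
  "\<forall>x\<in>A. \<forall>y\<in>A. mt x y = mt y x \<and> jn x y = jn y x"
  "\<forall>x\<in>A. \<forall>y\<in>A. \<forall>z\<in>A. mt x (mt y z) = mt (mt x y) z \<and> jn x (jn y z) = jn (jn x y) z"
  "\<forall>x\<in>A. \<forall>y\<in>A. mt x (jn x y) = x \<and> jn x (mt x y) = x"
  "\<forall>x\<in>A. jn x bt = x \<and> mt x tp = x"
  "\<forall>x\<in>A. \<forall>y\<in>A. cj x y = cj y x"
  "\<forall>x\<in>A. \<forall>y\<in>A. \<forall>z\<in>A. cj x (cj y z) = cj (cj x y) z"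
  "\<forall>x\<in>A. cj x tp = x"
  "\<forall>x\<in>A. \<forall>y\<in>A. \<forall>z\<in>A. (mt (cj x y) z = cj x y) \<longleftrightarrow> (mt x (im y z) = x)"
  "\<forall>x\<in>A. \<forall>y\<in>A. jn (im x y) (im y x) = tp"
  "\<forall>x\<in>A. \<forall>y\<in>A. jn (im (cj x y) bt) (im (mt x y) (cj x y)) = tp"
  "\<forall>x\<in>A. im (im x bt) bt = x"
  apply (insert ax[unfolded nm_algebra_def])
  apply (elim conjE, assumption)+
  done

lemma bt_in[simp]: "bt \<in> A" by (rule axs(1))
lemma tp_in[simp]: "tp \<in> A" by (rule axs(2))
lemma mt_comm: "x \<in> A \<Longrightarrow> y \<in> A \<Longrightarrow> mt x y = mt y x" by (rule axs(4)[rule_format, THEN conjunct1])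
lemma jn_comm: "x \<in> A \<Longrightarrow> y \<in> A \<Longrightarrow> jn x y = jn y x" by (rule axs(4)[rule_format, THEN conjunct2])
lemma mt_assoc: "x \<in> A \<Longrightarrow> y \<in> A \<Longrightarrow> z \<in> A \<Longrightarrow> mt x (mt y z) = mt (mt x y) z" by (rule axs(5)[rule_format, THEN conjunct1])
lemma jn_assoc: "x \<in> A \<Longrightarrow> y \<in> A \<Longrightarrow> z \<in> A \<Longrightarrow> jn x (jn y z) = jn (jn x y) z" by (rule axs(5)[rule_format, THEN conjunct2])
lemma absorb1: "x \<in> A \<Longrightarrow> y \<in> A \<Longrightarrow> mt x (jn x y) = x" by (rule axs(6)[rule_format, THEN conjunct1])
lemma absorb2: "x \<in> A \<Longrightarrow> y \<in> A \<Longrightarrow> jn x (mt x y) = x" by (rule axs(6)[rule_format, THEN conjunct2])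
lemma jn_bt: "x \<in> A \<Longrightarrow> jn x bt = x" by (rule axs(7)[rule_format, THEN conjunct1])
lemma mt_tp: "x \<in> A \<Longrightarrow> mt x tp = x" by (rule axs(7)[rule_format, THEN conjunct2])
lemma cj_comm: "x \<in> A \<Longrightarrow> y \<in> A \<Longrightarrow> cj x y = cj y x" by (rule axs(8)[rule_format])
lemma cj_assoc: "x \<in> A \<Longrightarrow> y \<in> A \<Longrightarrow> z \<in> A \<Longrightarrow> cj x (cj y z) = cj (cj x y) z" by (rule axs(9)[rule_format])
lemma cj_tp: "x \<in> A \<Longrightarrow> cj x tp = x" by (rule axs(10)[rule_format])
lemma resid0: "x \<in> A \<Longrightarrow> y \<in> A \<Longrightarrow> z \<in> A \<Longrightarrow> (mt (cj x y) z = cj x y) \<longleftrightarrow> (mt x (im y z) = x)" by (rule axs(11)[rule_format])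
lemma prelin: "x \<in> A \<Longrightarrow> y \<in> A \<Longrightarrow> jn (im x y) (im y x) = tp" by (rule axs(12)[rule_format])
lemma nmax: "x \<in> A \<Longrightarrow> y \<in> A \<Longrightarrow> jn (im (cj x y) bt) (im (mt x y) (cj x y)) = tp" by (rule axs(13)[rule_format])
lemma invol: "x \<in> A \<Longrightarrow> im (im x bt) bt = x" by (rule axs(14)[rule_format])
lemma cl[simp]: "x \<in> A \<Longrightarrow> y \<in> A \<Longrightarrow> mt x y \<in> A"
  "x \<in> A \<Longrightarrow> y \<in> A \<Longrightarrow> jn x y \<in> A"
  "x \<in> A \<Longrightarrow> y \<in> A \<Longrightarrow> cj x y \<in> A"
  "x \<in> A \<Longrightarrow> y \<in> A \<Longrightarrow> im x y \<in> A"
  using axs(3) by blast+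

definition le where "le x y \<longleftrightarrow> mt x y = x"

lemma mt_idem: "x \<in> A \<Longrightarrow> mt x x = x"
proof -
  assume x: "x \<in> A"
  have "mt x x = mt x (jn x (mt x x))" using x by (simp add: absorb2)
  also have "\<dots> = x" using x by (simp add: absorb1)
  finally show ?thesis .
qed

lemma le_jn: assumes x: "x \<in> A" and y: "y \<in> A" shows "le x y \<longleftrightarrow> jn x y = y"
proof
  assume "le x y" then have e: "mt x y = x" by (simp add: le_def)
  have "jn x y = jn (mt x y) y" by (simp only: e)
  also have "\<dots> = jn y (mt y x)" using x y by (metis jn_comm mt_comm cl)
  also have "\<dots> = y" using y x by (rule absorb2)
  finally show "jn x y = y" .
next
  assume e: "jn x y = y"
  have "mt x y = mt x (jn x y)" by (simp only: e)
  also have "\<dots> = x" using x y by (rule absorb1)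
  finally show "le x y" by (simp add: le_def)
qed

lemma le_refl: "x \<in> A \<Longrightarrow> le x x" by (simp add: le_def mt_idem)
lemma le_antisym: "x \<in> A \<Longrightarrow> y \<in> A \<Longrightarrow> le x y \<Longrightarrow> le y x \<Longrightarrow> x = y"
  unfolding le_def by (metis mt_comm)
lemma le_trans: "x \<in> A \<Longrightarrow> y \<in> A \<Longrightarrow> z \<in> A \<Longrightarrow> le x y \<Longrightarrow> le y z \<Longrightarrow> le x z"
  unfolding le_def by (metis mt_assoc)
lemma mt_le1: "x \<in> A \<Longrightarrow> y \<in> A \<Longrightarrow> le (mt x y) x"
  unfolding le_def by (metis mt_assoc mt_comm mt_idem)
lemma mt_le2: "x \<in> A \<Longrightarrow> y \<in> A \<Longrightarrow> le (mt x y) y"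
  by (metis mt_comm mt_le1)
lemma mt_glb: "x \<in> A \<Longrightarrow> y \<in> A \<Longrightarrow> z \<in> A \<Longrightarrow> le z x \<Longrightarrow> le z y \<Longrightarrow> le z (mt x y)"
  unfolding le_def by (metis mt_assoc)
lemma jn_ge1: "x \<in> A \<Longrightarrow> y \<in> A \<Longrightarrow> le x (jn x y)"
  unfolding le_def by (simp add: absorb1)
lemma jn_ge2: "x \<in> A \<Longrightarrow> y \<in> A \<Longrightarrow> le y (jn x y)"
  by (metis jn_comm jn_ge1)
lemma jn_lub: "x \<in> A \<Longrightarrow> y \<in> A \<Longrightarrow> z \<in> A \<Longrightarrow> le x z \<Longrightarrow> le y z \<Longrightarrow> le (jn x y) z"
  by (metis cl(2) jn_assoc le_jn)
lemma bt_le: "x \<in> A \<Longrightarrow> le bt x"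
  by (metis bt_in jn_bt jn_comm le_jn)
lemma le_tp: "x \<in> A \<Longrightarrow> le x tp"
  by (simp add: le_def mt_tp)
lemma resid: "x \<in> A \<Longrightarrow> y \<in> A \<Longrightarrow> z \<in> A \<Longrightarrow> le (cj x y) z \<longleftrightarrow> le x (im y z)"
  unfolding le_def using resid0 by blast
lemma yoneda: "x \<in> A \<Longrightarrow> y \<in> A \<Longrightarrow> (\<And>w. w \<in> A \<Longrightarrow> le w x \<longleftrightarrow> le w y) \<Longrightarrow> x = y"
  by (meson le_antisym le_refl)
lemma tp_unique: "x \<in> A \<Longrightarrow> le tp x \<Longrightarrow> x = tp"
  by (simp add: le_antisym le_tp)

lemma cj_mono: "x \<in> A \<Longrightarrow> y \<in> A \<Longrightarrow> z \<in> A \<Longrightarrow> le x y \<Longrightarrow> le (cj x z) (cj y z)"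
  by (meson cl(3) cl(4) le_refl le_trans resid)
lemma cj_mono2: "x \<in> A \<Longrightarrow> y \<in> A \<Longrightarrow> z \<in> A \<Longrightarrow> le x y \<Longrightarrow> le (cj z x) (cj z y)"
  by (metis cj_comm cj_mono)
lemma cj_mono_both: "x \<in> A \<Longrightarrow> y \<in> A \<Longrightarrow> x' \<in> A \<Longrightarrow> y' \<in> A \<Longrightarrow> le x x' \<Longrightarrow> le y y' \<Longrightarrow> le (cj x y) (cj x' y')"
  by (meson cj_mono cj_mono2 cl(3) le_trans)
lemma cj_le1: "x \<in> A \<Longrightarrow> y \<in> A \<Longrightarrow> le (cj x y) x"
  by (metis cj_mono2 cj_tp le_tp tp_in)
lemma cj_le2: "x \<in> A \<Longrightarrow> y \<in> A \<Longrightarrow> le (cj x y) y"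
  by (metis cj_comm cj_le1)
lemma tp_cj: "x \<in> A \<Longrightarrow> cj tp x = x"
  by (metis cj_comm cj_tp tp_in)

lemma le_im: "x \<in> A \<Longrightarrow> y \<in> A \<Longrightarrow> le x y \<longleftrightarrow> im x y = tp"
  by (metis cl(4) le_tp resid tp_cj tp_in tp_unique)
lemma im_refl: "x \<in> A \<Longrightarrow> im x x = tp"
  using le_im le_refl by blast
lemma tp_im: "x \<in> A \<Longrightarrow> im tp x = x"
  apply (rule yoneda) apply simp_all
  by (metis cj_tp resid tp_in)
lemma mp_le: "x \<in> A \<Longrightarrow> y \<in> A \<Longrightarrow> le (cj x (im x y)) y"
  by (metis cj_comm cl(4) le_refl resid)
lemma im_trans_le: assumes x: "x \<in> A" and y: "y \<in> A" and z: "z \<in> A"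
  shows "le (cj (im x y) (im y z)) (im x z)"
proof -
  have p: "im x y \<in> A" and q: "im y z \<in> A" using x y z by simp_all
  have e1: "cj (cj (im x y) (im y z)) x = cj (cj (im y z) (im x y)) x"
    using p q by (simp only: cj_comm[OF p q])
  have e2: "cj (cj (im y z) (im x y)) x = cj (im y z) (cj (im x y) x)"
    using q p x by (rule cj_assoc[symmetric])
  have e3: "cj (im x y) x = cj x (im x y)" using p x by (rule cj_comm)
  have "le (cj (im y z) (cj x (im x y))) (cj (im y z) y)"
    using x y q by (simp add: cj_mono2 mp_le)
  moreover have "le (cj (im y z) y) z"
  proof -
    have "cj (im y z) y = cj y (im y z)" using q y by (rule cj_comm)
    then show ?thesis using y z by (simp add: mp_le)
  qed
  ultimately have "le (cj (cj (im x y) (im y z)) x) z"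
    using x y z e1 e2 e3 by (metis cl le_trans)
  then show ?thesis using p q x z by (simp add: resid)
qed
lemma im_curry: assumes x: "x \<in> A" and y: "y \<in> A" and z: "z \<in> A"
  shows "im (cj x y) z = im x (im y z)"
proof (rule yoneda)
  fix w assume w: "w \<in> A"
  have "le w (im (cj x y) z) \<longleftrightarrow> le (cj w (cj x y)) z" using w x y z by (simp add: resid)
  also have "cj w (cj x y) = cj (cj w x) y" using w x y by (rule cj_assoc)
  also have "le (cj (cj w x) y) z \<longleftrightarrow> le (cj w x) (im y z)" using w x y z by (simp add: resid)
  also have "\<dots> \<longleftrightarrow> le w (im x (im y z))" using w x y z by (simp add: resid)
  finally show "le w (im (cj x y) z) \<longleftrightarrow> le w (im x (im y z))" .
qed (use x y z in simp_all)
lemma le_jn_iff: "x \<in> A \<Longrightarrow> y \<in> A \<Longrightarrow> z \<in> A \<Longrightarrow> le (jn x y) z \<longleftrightarrow> le x z \<and> le y z"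
  by (meson cl jn_ge1 jn_ge2 jn_lub le_trans)
lemma le_mt_iff: "x \<in> A \<Longrightarrow> y \<in> A \<Longrightarrow> z \<in> A \<Longrightarrow> le z (mt x y) \<longleftrightarrow> le z x \<and> le z y"
  by (meson cl mt_le1 mt_le2 mt_glb le_trans)
lemma resid': "x \<in> A \<Longrightarrow> y \<in> A \<Longrightarrow> z \<in> A \<Longrightarrow> le (cj y x) z \<longleftrightarrow> le x (im y z)"
proof -
  assume x: "x \<in> A" and y: "y \<in> A" and z: "z \<in> A"
  have "cj y x = cj x y" using y x by (rule cj_comm)
  then show ?thesis using x y z by (simp add: resid)
qed
lemma im_jn: assumes a: "a \<in> A" and b: "b \<in> A" and c: "c \<in> A"
  shows "im (jn a b) c = mt (im a c) (im b c)"
proof (rule yoneda)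
  fix w assume w: "w \<in> A"
  have "le w (im (jn a b) c) \<longleftrightarrow> le (cj w (jn a b)) c" using w a b c by (simp add: resid)
  also have "\<dots> \<longleftrightarrow> le (jn a b) (im w c)" using w a b c by (simp add: resid')
  also have "\<dots> \<longleftrightarrow> le a (im w c) \<and> le b (im w c)" using w a b c by (simp add: le_jn_iff)
  also have "\<dots> \<longleftrightarrow> le (cj w a) c \<and> le (cj w b) c" using w a b c by (simp add: resid')
  also have "\<dots> \<longleftrightarrow> le w (im a c) \<and> le w (im b c)" using w a b c by (simp add: resid)
  also have "\<dots> \<longleftrightarrow> le w (mt (im a c) (im b c))" using w a b c by (simp add: le_mt_iff)
  finally show "le w (im (jn a b) c) \<longleftrightarrow> le w (mt (im a c) (im b c))" .
qed (use a b c in simp_all)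
lemma im_mt: assumes a: "a \<in> A" and b: "b \<in> A" and c: "c \<in> A"
  shows "im c (mt a b) = mt (im c a) (im c b)"
proof (rule yoneda)
  fix w assume w: "w \<in> A"
  have "le w (im c (mt a b)) \<longleftrightarrow> le (cj w c) (mt a b)" using w a b c by (simp add: resid)
  also have "\<dots> \<longleftrightarrow> le (cj w c) a \<and> le (cj w c) b" using w a b c by (simp add: le_mt_iff)
  also have "\<dots> \<longleftrightarrow> le w (im c a) \<and> le w (im c b)" using w a b c by (simp add: resid)
  also have "\<dots> \<longleftrightarrow> le w (mt (im c a) (im c b))" using w a b c by (simp add: le_mt_iff)
  finally show "le w (im c (mt a b)) \<longleftrightarrow> le w (mt (im c a) (im c b))" .
qed (use a b c in simp_all)
lemma yoneda2: "x \<in> A \<Longrightarrow> y \<in> A \<Longrightarrow> (\<And>w. w \<in> A \<Longrightarrow> le x w \<longleftrightarrow> le y w) \<Longrightarrow> x = y"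
  by (meson le_antisym le_refl)
lemma distrib: "x \<in> A \<Longrightarrow> y \<in> A \<Longrightarrow> z \<in> A \<Longrightarrow> cj x (jn y z) = jn (cj x y) (cj x z)"
proof (rule yoneda2)
  fix w assume x: "x \<in> A" and y: "y \<in> A" and z: "z \<in> A" and w: "w \<in> A"
  have "le (cj x (jn y z)) w \<longleftrightarrow> le (jn y z) (im x w)"
    using x y z w by (simp add: resid')
  also have "\<dots> \<longleftrightarrow> le y (im x w) \<and> le z (im x w)"
    using x y z w by (simp add: le_jn_iff)
  also have "\<dots> \<longleftrightarrow> le (cj x y) w \<and> le (cj x z) w"
    using x y z w by (simp add: resid')
  also have "\<dots> \<longleftrightarrow> le (jn (cj x y) (cj x z)) w"
    using x y z w by (simp add: le_jn_iff)
  finally show "le (cj x (jn y z)) w \<longleftrightarrow> le (jn (cj x y) (cj x z)) w" .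
qed auto
end


context nmA begin

definition filt :: "'a set \<Rightarrow> bool" where
  "filt F \<longleftrightarrow> F \<subseteq> A \<and> tp \<in> F \<and> (\<forall>x\<in>F. \<forall>y\<in>A. le x y \<longrightarrow> y \<in> F) \<and> (\<forall>x\<in>F. \<forall>y\<in>F. cj x y \<in> F)"

primrec pw :: "'a \<Rightarrow> nat \<Rightarrow> 'a" where
  "pw a 0 = tp" | "pw a (Suc k) = cj a (pw a k)"

lemma pw_in[simp]: "a \<in> A \<Longrightarrow> pw a k \<in> A"
  by (induction k) simp_all

lemma pw_add: assumes a: "a \<in> A" shows "pw a (k + m) = cj (pw a k) (pw a m)"
proof (induction k)
  case 0 then show ?case using a by (simp add: tp_cj)
next
  case (Suc k)
  have "pw a (Suc k + m) = cj a (pw a (k + m))" by simp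
  also have "\<dots> = cj a (cj (pw a k) (pw a m))" by (simp only: Suc)
  also have "\<dots> = cj (cj a (pw a k)) (pw a m)" using a by (simp add: cj_assoc)
  finally show ?case by simp
qed

lemma pw_anti: "a \<in> A \<Longrightarrow> le (pw a (k + m)) (pw a k)"
  by (simp add: pw_add cj_le1)

lemma cj_swap: assumes a: "a \<in> A" and b: "b \<in> A" and c: "c \<in> A" and d: "d \<in> A"
  shows "cj (cj a b) (cj c d) = cj (cj a c) (cj b d)"
proof -
  have "cj (cj a b) (cj c d) = cj a (cj b (cj c d))" using a b c d by (simp add: cj_assoc)
  also have "cj b (cj c d) = cj (cj b c) d" using b c d by (rule cj_assoc)
  also have "cj b c = cj c b" using b c by (rule cj_comm)
  also have "cj (cj c b) d = cj c (cj b d)" using b c d by (simp add: cj_assoc)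
  also have "cj a (cj c (cj b d)) = cj (cj a c) (cj b d)" using a b c d by (simp add: cj_assoc)
  finally show ?thesis .
qed

definition gen :: "'a set \<Rightarrow> 'a \<Rightarrow> 'a set" where
  "gen F a = {z \<in> A. \<exists>f\<in>F. \<exists>k. le (cj f (pw a k)) z}"

lemma gen_filt: assumes F: "filt F" and a: "a \<in> A" shows "filt (gen F a)"
proof -
  have FA: "F \<subseteq> A" and tpF: "tp \<in> F" and up: "\<forall>x\<in>F. \<forall>y\<in>A. le x y \<longrightarrow> y \<in> F"
    and cjF: "\<forall>x\<in>F. \<forall>y\<in>F. cj x y \<in> F" using F unfolding filt_def by blast+
  have "tp \<in> gen F a" unfolding gen_def
    using tpF by (intro CollectI conjI tp_in bexI[of _ tp] exI[of _ 0]) (simp_all add: cj_tp le_refl)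
  moreover have "\<forall>x\<in>gen F a. \<forall>y\<in>A. le x y \<longrightarrow> y \<in> gen F a"
  proof (intro ballI impI)
    fix x y assume x: "x \<in> gen F a" and y: "y \<in> A" and xy: "le x y"
    then obtain f k where f: "f \<in> F" and l: "le (cj f (pw a k)) x" and xA: "x \<in> A"
      unfolding gen_def by blast
    have "f \<in> A" using f FA by auto
    then have "le (cj f (pw a k)) y" using l xy xA y a by (meson cl pw_in le_trans)
    then show "y \<in> gen F a" unfolding gen_def using f y by blast
  qed
  moreover have "\<forall>x\<in>gen F a. \<forall>y\<in>gen F a. cj x y \<in> gen F a"
  proof (intro ballI)
    fix x y assume x: "x \<in> gen F a" and y: "y \<in> gen F a"
    then obtain f1 k1 f2 k2 where f1: "f1 \<in> F" and l1: "le (cj f1 (pw a k1)) x"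
      and f2: "f2 \<in> F" and l2: "le (cj f2 (pw a k2)) y" and xA: "x \<in> A" and yA: "y \<in> A"
      unfolding gen_def by blast
    have f1A: "f1 \<in> A" and f2A: "f2 \<in> A" using f1 f2 FA by auto
    have "cj (cj f1 f2) (pw a (k1 + k2)) = cj (cj f1 (pw a k1)) (cj f2 (pw a k2))"
      using f1A f2A a by (simp add: pw_add cj_swap)
    moreover have "le (cj (cj f1 (pw a k1)) (cj f2 (pw a k2))) (cj x y)"
      using l1 l2 f1A f2A a xA yA by (simp add: cj_mono_both)
    ultimately have "le (cj (cj f1 f2) (pw a (k1 + k2))) (cj x y)" by simp
    moreover have "cj f1 f2 \<in> F" using cjF f1 f2 by blast
    ultimately show "cj x y \<in> gen F a" unfolding gen_def using xA yA by auto
  qed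
  ultimately show ?thesis unfolding filt_def gen_def by blast
qed

lemma F_sub_gen: assumes F: "filt F" and a: "a \<in> A" shows "F \<subseteq> gen F a"
proof
  fix f assume f: "f \<in> F"
  then have "f \<in> A" using F unfolding filt_def by blast
  then show "f \<in> gen F a" unfolding gen_def using f
    by (intro CollectI conjI bexI[of _ f] exI[of _ 0]) (simp_all add: cj_tp le_refl)
qed

lemma a_in_gen: assumes F: "filt F" and a: "a \<in> A" shows "a \<in> gen F a"
proof -
  have "tp \<in> F" using F unfolding filt_def by blast
  then show ?thesis unfolding gen_def using a
    by (intro CollectI conjI bexI[of _ tp] exI[of _ 1]) (simp_all add: cj_tp tp_cj le_refl)
qed

lemma jn_cj_tp: assumes a: "a \<in> A" and b: "b \<in> A" and c: "c \<in> A"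
  and ab: "jn a b = tp" and ac: "jn a c = tp" shows "jn a (cj b c) = tp"
proof -
  have "tp = cj (jn a b) (jn a c)" using ab ac by (simp add: cj_tp)
  also have "\<dots> = jn (cj (jn a b) a) (cj (jn a b) c)" using a b c by (simp add: distrib)
  finally have e: "tp = jn (cj (jn a b) a) (cj (jn a b) c)" .
  have l1: "le (cj (jn a b) a) (jn a (cj b c))"
    using a b c by (meson cj_le2 cl jn_ge1 le_trans)
  have "cj (jn a b) c = cj c (jn a b)" using a b c by (simp add: cj_comm)
  also have "\<dots> = jn (cj c a) (cj c b)" using a b c by (simp add: distrib)
  also have "cj c b = cj b c" using c b by (rule cj_comm)
  finally have e2: "cj (jn a b) c = jn (cj c a) (cj b c)" .
  have "le (jn (cj c a) (cj b c)) (jn a (cj b c))"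
    using a b c by (meson cj_le2 cl jn_ge1 jn_ge2 jn_lub le_trans)
  then have l2: "le (cj (jn a b) c) (jn a (cj b c))" using e2 by simp
  have "le tp (jn a (cj b c))" using l1 l2 a b c e by (metis cl jn_lub)
  then show ?thesis using a b c by (simp add: tp_unique)
qed

lemma jn_pw_tp1: assumes a: "a \<in> A" and b: "b \<in> A" and ab: "jn a b = tp" shows "jn a (pw b N) = tp"
proof (induction N)
  case 0 show ?case using a by (simp add: le_jn[symmetric] le_tp)
next
  case (Suc N) show ?case using jn_cj_tp[OF a b _ ab Suc] b by simp
qed

lemma jn_pw_tp: assumes a: "a \<in> A" and b: "b \<in> A" and ab: "jn a b = tp"
  shows "jn (pw a N) (pw b N) = tp"
proof -
  have "jn b a = tp" using ab a b by (simp add: jn_comm)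
  then have "jn b (pw a N) = tp" using jn_pw_tp1 a b by blast
  then have "jn (pw a N) b = tp" using a b by (simp add: jn_comm)
  then show ?thesis using jn_pw_tp1 a b by simp
qed

lemma max_prime: assumes F: "filt F" and c: "c \<in> A" and cF: "c \<notin> F"
  and mx: "\<And>G. filt G \<Longrightarrow> c \<notin> G \<Longrightarrow> F \<subseteq> G \<Longrightarrow> G = F"
  and x: "x \<in> A" and y: "y \<in> A"
  shows "im x y \<in> F \<or> im y x \<in> F"
proof (rule ccontr)
  assume "\<not> ?thesis"
  then have pF: "im x y \<notin> F" and qF: "im y x \<notin> F" by auto
  define p where "p = im x y"
  define q where "q = im y x"
  have p: "p \<in> A" and q: "q \<in> A" using x y by (simp_all add: p_def q_def)
  have FA: "F \<subseteq> A" and cjF: "\<forall>x\<in>F. \<forall>y\<in>F. cj x y \<in> F"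
    and up: "\<forall>x\<in>F. \<forall>y\<in>A. le x y \<longrightarrow> y \<in> F" using F unfolding filt_def by blast+
  have "c \<in> gen F p"
  proof (rule ccontr)
    assume "c \<notin> gen F p"
    then have "gen F p = F" using mx gen_filt F_sub_gen F p by blast
    then show False using a_in_gen[OF F p] pF p_def by simp
  qed
  then obtain f1 k1 where f1: "f1 \<in> F" and l1: "le (cj f1 (pw p k1)) c" unfolding gen_def by blast
  have "c \<in> gen F q"
  proof (rule ccontr)
    assume "c \<notin> gen F q"
    then have "gen F q = F" using mx gen_filt F_sub_gen F q by blast
    then show False using a_in_gen[OF F q] qF q_def by simp
  qed
  then obtain f2 k2 where f2: "f2 \<in> F" and l2: "le (cj f2 (pw q k2)) c" unfolding gen_def by blast
  have f1A: "f1 \<in> A" and f2A: "f2 \<in> A" using f1 f2 FA by auto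
  define f where "f = cj f1 f2"
  have fF: "f \<in> F" using cjF f1 f2 f_def by blast
  have fA: "f \<in> A" using f1A f2A f_def by simp
  have m1: "le (cj f (pw p (k1 + k2))) c"
  proof -
    have "le (cj f (pw p (k1 + k2))) (cj f1 (pw p k1))"
      unfolding f_def using f1A f2A p by (simp add: cj_mono_both cj_le1 pw_anti)
    then show ?thesis using l1 f1A f2A p c fA by (meson cl pw_in le_trans)
  qed
  have m2: "le (cj f (pw q (k1 + k2))) c"
  proof -
    have "le (pw q (k2 + k1)) (pw q k2)" using q by (rule pw_anti)
    then have "le (cj f (pw q (k1 + k2))) (cj f2 (pw q k2))"
      unfolding f_def using f1A f2A q by (simp add: cj_mono_both cj_le2 add.commute)
    then show ?thesis using l2 f1A f2A q c fA by (meson cl pw_in le_trans)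
  qed
  have "jn p q = tp" unfolding p_def q_def using x y by (rule prelin)
  then have jt: "jn (pw p (k1 + k2)) (pw q (k1 + k2)) = tp" by (rule jn_pw_tp[OF p q])
  have "cj f (jn (pw p (k1 + k2)) (pw q (k1 + k2))) = jn (cj f (pw p (k1 + k2))) (cj f (pw q (k1 + k2)))"
    using fA p q by (simp add: distrib)
  then have "f = jn (cj f (pw p (k1 + k2))) (cj f (pw q (k1 + k2)))" using jt fA by (simp add: cj_tp)
  then have "le f c" using m1 m2 fA p q c by (metis cl pw_in jn_lub)
  then have "c \<in> F" using up fF c by blast
  then show False using cF by simp
qed

lemma exists_prime: assumes c: "c \<in> A" and ctp: "c \<noteq> tp"
  shows "\<exists>F. filt F \<and> c \<notin> F \<and> (\<forall>x\<in>A. \<forall>y\<in>A. im x y \<in> F \<or> im y x \<in> F)"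
proof -
  define AA where "AA = {G. filt G \<and> c \<notin> G}"
  have "{tp} \<in> AA" unfolding AA_def filt_def using ctp by (auto simp: cj_tp tp_unique)
  then have ne: "AA \<noteq> {}" by blast
  have ch: "\<Union>C \<in> AA" if "C \<noteq> {}" "subset.chain AA C" for C
  proof -
    have CA: "C \<subseteq> AA" and lin: "\<forall>X\<in>C. \<forall>Y\<in>C. X \<subseteq> Y \<or> Y \<subseteq> X"
      using that(2) by (simp_all add: subset_chain_def)
    have fC: "\<And>G. G \<in> C \<Longrightarrow> filt G \<and> c \<notin> G" using CA AA_def by blast
    have "filt (\<Union>C)" unfolding filt_def
    proof (intro conjI)
      show "\<Union>C \<subseteq> A" using fC unfolding filt_def by blast
      show "tp \<in> \<Union>C" using fC that(1) unfolding filt_def by blast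
      show "\<forall>x\<in>\<Union>C. \<forall>y\<in>A. le x y \<longrightarrow> y \<in> \<Union>C" using fC unfolding filt_def by blast
      show "\<forall>x\<in>\<Union>C. \<forall>y\<in>\<Union>C. cj x y \<in> \<Union>C"
      proof (intro ballI)
        fix x y assume "x \<in> \<Union>C" "y \<in> \<Union>C"
        then obtain X Y where X: "X \<in> C" "x \<in> X" and Y: "Y \<in> C" "y \<in> Y" by blast
        from lin X Y have "X \<subseteq> Y \<or> Y \<subseteq> X" by blast
        then show "cj x y \<in> \<Union>C"
        proof
          assume "X \<subseteq> Y" then show ?thesis using fC[OF Y(1)] X Y unfolding filt_def by blast
        next
          assume "Y \<subseteq> X" then show ?thesis using fC[OF X(1)] X Y unfolding filt_def by blast
        qed
      qed
    qed
    moreover have "c \<notin> \<Union>C" using fC by blast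
    ultimately show ?thesis unfolding AA_def by blast
  qed
  obtain M where M: "M \<in> AA" and mx: "\<forall>X\<in>AA. M \<subseteq> X \<longrightarrow> X = M"
    using subset_Zorn_nonempty[OF ne ch] by blast
  have MF: "filt M" and cM: "c \<notin> M" using M AA_def by auto
  have "\<forall>x\<in>A. \<forall>y\<in>A. im x y \<in> M \<or> im y x \<in> M"
    using max_prime[OF MF c cM] mx unfolding AA_def by blast
  then show ?thesis using MF cM by blast
qed

end


lemma eval_std_simps[simp]:
  "eval_std \<mu> (Var i) = \<mu> i"
  "eval_std \<mu> Bot = 0"
  "eval_std \<mu> Top = 1"
  "eval_std \<mu> (And a b) = min (eval_std \<mu> a) (eval_std \<mu> b)"
  "eval_std \<mu> (Or a b) = max (eval_std \<mu> a) (eval_std \<mu> b)"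
  "eval_std \<mu> (Conj a b) = std_conj (eval_std \<mu> a) (eval_std \<mu> b)"
  "eval_std \<mu> (Imp a b) = std_imp (eval_std \<mu> a) (eval_std \<mu> b)"
  by (simp_all add: eval_std_def)

lemma eval_alg_cong: "(\<And>i. i \<in> vars \<phi> \<Longrightarrow> v i = w i) \<Longrightarrow>
  eval_alg mt jn cj im bt tp v \<phi> = eval_alg mt jn cj im bt tp w \<phi>"
  by (induction \<phi>) auto

lemma eval_std_cong: "(\<And>i. i \<in> vars \<phi> \<Longrightarrow> v i = w i) \<Longrightarrow> eval_std v \<phi> = eval_std w \<phi>"
  unfolding eval_std_def by (rule eval_alg_cong)

definition Qn :: "nat \<Rightarrow> real set" where
  "Qn n = {real k / real m | k m. 0 < m \<and> m \<le> 4*n+4 \<and> k \<le> m}"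

context nmA begin

definition neg where "neg x = im x bt"

lemma neg_in[simp]: "x \<in> A \<Longrightarrow> neg x \<in> A" by (simp add: neg_def)
lemma neg_neg[simp]: "x \<in> A \<Longrightarrow> neg (neg x) = x" by (simp add: neg_def invol)
lemma neg_bt: "neg bt = tp" by (simp add: neg_def im_refl)
lemma neg_tp: "neg tp = bt" by (simp add: neg_def tp_im)

lemma eval_in: "(\<And>i. v i \<in> A) \<Longrightarrow> eval_alg mt jn cj im bt tp v \<phi> \<in> A"
  by (induction \<phi>) auto

end

locale pf = nmA +
  fixes F
  assumes filtF: "filt F" and btF: "bt \<notin> F" and totF: "\<forall>x\<in>A. \<forall>y\<in>A. im x y \<in> F \<or> im y x \<in> F"
begin

definition leF where "leF x y \<longleftrightarrow> im x y \<in> F"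
definition eqF where "eqF x y \<longleftrightarrow> leF x y \<and> leF y x"

lemma FA: "F \<subseteq> A" and tpF: "tp \<in> F" and upF: "\<And>x y. x \<in> F \<Longrightarrow> y \<in> A \<Longrightarrow> le x y \<Longrightarrow> y \<in> F"
  and cjF: "\<And>x y. x \<in> F \<Longrightarrow> y \<in> F \<Longrightarrow> cj x y \<in> F"
  using filtF unfolding filt_def by blast+

lemma mpF: assumes x: "x \<in> F" and y: "y \<in> A" and xy: "im x y \<in> F" shows "y \<in> F"
proof -
  have xA: "x \<in> A" using x FA by auto
  have "cj x (im x y) \<in> F" using x xy cjF by blast
  then show ?thesis using upF y mp_le[OF xA y] by blast
qed

lemma le_leF: "x \<in> A \<Longrightarrow> y \<in> A \<Longrightarrow> le x y \<Longrightarrow> leF x y"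
  by (simp add: leF_def le_im tpF)
lemma leF_refl: "x \<in> A \<Longrightarrow> leF x x" by (simp add: le_leF le_refl)
lemma leF_trans: assumes x: "x \<in> A" and y: "y \<in> A" and z: "z \<in> A" and xy: "leF x y" and yz: "leF y z"
  shows "leF x z"
proof -
  have "cj (im x y) (im y z) \<in> F" using xy yz cjF leF_def by blast
  then show ?thesis unfolding leF_def using upF im_trans_le[OF x y z] x z by simp
qed
lemma leF_total: "x \<in> A \<Longrightarrow> y \<in> A \<Longrightarrow> leF x y \<or> leF y x"
  using totF leF_def by blast
lemma tp_leF: "x \<in> A \<Longrightarrow> leF tp x \<longleftrightarrow> x \<in> F" by (simp add: leF_def tp_im)
lemma bt_leF: "x \<in> A \<Longrightarrow> leF bt x" by (simp add: le_leF bt_le)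
lemma leF_tp: "x \<in> A \<Longrightarrow> leF x tp" by (simp add: le_leF le_tp)
lemma not_tp_bt: "\<not> leF tp bt" using tp_leF btF by simp

lemma neg_rev: assumes x: "x \<in> A" and y: "y \<in> A" and xy: "leF x y" shows "leF (neg y) (neg x)"
proof -
  have "le (cj (im x y) (im y bt)) (im x bt)" using x y by (simp add: im_trans_le)
  then have "le (im x y) (im (neg y) (neg x))" using x y by (simp add: resid neg_def)
  then show ?thesis using xy upF x y unfolding leF_def by simp
qed
lemma neg_rev_iff: "x \<in> A \<Longrightarrow> y \<in> A \<Longrightarrow> leF (neg y) (neg x) \<longleftrightarrow> leF x y"
  by (metis neg_rev neg_in neg_neg)

lemma eqF_refl: "x \<in> A \<Longrightarrow> eqF x x" by (simp add: eqF_def leF_refl)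
lemma eqF_sym: "eqF x y \<Longrightarrow> eqF y x" by (simp add: eqF_def)
lemma eqF_trans: "x \<in> A \<Longrightarrow> y \<in> A \<Longrightarrow> z \<in> A \<Longrightarrow> eqF x y \<Longrightarrow> eqF y z \<Longrightarrow> eqF x z"
  unfolding eqF_def by (meson leF_trans)
lemma neg_cong: "x \<in> A \<Longrightarrow> y \<in> A \<Longrightarrow> eqF x y \<Longrightarrow> eqF (neg x) (neg y)"
  unfolding eqF_def by (simp add: neg_rev)

lemma mt_case1: assumes x: "x \<in> A" and y: "y \<in> A" and xy: "leF x y" shows "eqF (mt x y) x"
proof -
  have "im x (mt x y) = mt (im x x) (im x y)" using x y by (simp add: im_mt)
  also have "\<dots> = mt tp (im x y)" using x by (simp add: im_refl)
  also have "\<dots> = im x y" using x y by (metis cl(4) mt_comm mt_tp tp_in)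
  finally show ?thesis using xy x y unfolding eqF_def leF_def by (simp add: le_leF[unfolded leF_def] mt_le1)
qed
lemma mt_case2: assumes x: "x \<in> A" and y: "y \<in> A" and xy: "leF y x" shows "eqF (mt x y) y"
  using mt_case1[OF y x xy] mt_comm[OF x y] by simp
lemma jn_case1: assumes x: "x \<in> A" and y: "y \<in> A" and xy: "leF x y" shows "eqF (jn x y) y"
proof -
  have "im (jn x y) y = mt (im x y) (im y y)" using x y by (simp add: im_jn)
  also have "\<dots> = im x y" using x y by (simp add: im_refl mt_tp)
  finally show ?thesis using xy x y unfolding eqF_def leF_def by (simp add: le_leF[unfolded leF_def] jn_ge2)
qed
lemma jn_case2: assumes x: "x \<in> A" and y: "y \<in> A" and xy: "leF y x" shows "eqF (jn x y) x"
  using jn_case1[OF y x xy] jn_comm[OF x y] by simp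
lemma cj_case1: assumes x: "x \<in> A" and y: "y \<in> A" and xy: "leF x (neg y)" shows "eqF (cj x y) bt"
proof -
  have "im (cj x y) bt = im x (neg y)" using x y by (simp add: im_curry neg_def)
  then show ?thesis using xy x y unfolding eqF_def by (simp add: leF_def bt_leF[unfolded leF_def])
qed
lemma mt_tp_left: "x \<in> A \<Longrightarrow> mt tp x = x"
  by (metis mt_comm mt_tp tp_in)
lemma primeF: assumes x: "x \<in> A" and y: "y \<in> A" and j: "jn x y \<in> F" shows "x \<in> F \<or> y \<in> F"
proof (cases "im x y \<in> F")
  case True
  have "im (jn x y) y = mt (im x y) (im y y)" using x y by (simp add: im_jn)
  also have "\<dots> = im x y" using x y by (simp add: im_refl mt_tp)
  finally show ?thesis using True mpF[OF j y] by simp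
next
  case False
  then have f: "im y x \<in> F" using totF x y by blast
  have "im (jn x y) x = mt (im x x) (im y x)" using x y by (simp add: im_jn)
  also have "\<dots> = im y x" using x y by (simp add: im_refl mt_tp_left)
  finally show ?thesis using f mpF[OF j x] by simp
qed
lemma cj_case2: assumes x: "x \<in> A" and y: "y \<in> A" and xy: "\<not> leF x (neg y)" shows "eqF (cj x y) (mt x y)"
proof -
  have "jn (im (cj x y) bt) (im (mt x y) (cj x y)) \<in> F" using nmax[OF x y] tpF by simp
  moreover have "im (cj x y) bt = im x (neg y)" using x y by (simp add: im_curry neg_def)
  moreover have "im (cj x y) bt \<in> F \<or> im (mt x y) (cj x y) \<in> F"
    using calculation(1) x y by (intro primeF) simp_all
  ultimately have "im (mt x y) (cj x y) \<in> F" using xy unfolding leF_def by simp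
  moreover have "le (cj x y) (mt x y)" using x y by (simp add: le_mt_iff cj_le1 cj_le2)
  ultimately show ?thesis using x y unfolding eqF_def by (simp add: leF_def le_leF[unfolded leF_def])
qed
lemma im_case1: assumes x: "x \<in> A" and y: "y \<in> A" and xy: "leF x y" shows "eqF (im x y) tp"
proof -
  have "leF (im x y) tp" using x y by (simp add: leF_tp)
  moreover have "leF tp (im x y)" using x y xy by (simp add: tp_im leF_def)
  ultimately show ?thesis unfolding eqF_def by simp
qed
lemma im_case2: assumes x: "x \<in> A" and y: "y \<in> A" and xy: "\<not> leF x y"
  shows "eqF (im x y) (neg (mt x (neg y)))"
proof -
  have "neg (cj x (neg y)) = im x (neg (neg y))"
    using x y unfolding neg_def by (simp add: im_curry)
  then have e: "im x y = neg (cj x (neg y))" using y by simp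
  have "\<not> leF x (neg (neg y))" using xy y by simp
  then have "eqF (cj x (neg y)) (mt x (neg y))" using x y by (simp add: cj_case2)
  then show ?thesis using e x y by (simp add: neg_cong)
qed

end

locale pfv = pf +
  fixes n :: nat and v :: "nat \<Rightarrow> 'a"
  assumes vA: "\<And>i. v i \<in> A"
begin

definition S where "S = {bt, tp} \<union> v ` {..<n} \<union> neg ` v ` {..<n}"
definition lt where "lt x y \<longleftrightarrow> \<not> leF y x"
definition aa where "aa s = card {t \<in> S. lt t s}"
definition bb where "bb s = card {t \<in> S. lt s t}"
definition K where "K = bb bt"
definition h where "h s = (real (aa s) - real (bb s) + real K) / (2 * real K)"

lemma S_fin: "finite S" by (simp add: S_def)
lemma S_A: "S \<subseteq> A" using vA by (auto simp: S_def)
lemma bt_S: "bt \<in> S" and tp_S: "tp \<in> S" by (simp_all add: S_def)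
lemma v_S: "i < n \<Longrightarrow> v i \<in> S" by (simp add: S_def)
lemma neg_S: "s \<in> S \<Longrightarrow> neg s \<in> S"
  using vA by (auto simp: S_def neg_bt neg_tp)
lemma card_S: "card S \<le> 2 * n + 2"
proof -
  have "card S \<le> card {bt, tp} + card (v ` {..<n}) + card (neg ` v ` {..<n})"
  proof -
    have "card S \<le> card ({bt, tp} \<union> v ` {..<n}) + card (neg ` v ` {..<n})"
      unfolding S_def by (rule card_Un_le)
    moreover have "card ({bt, tp} \<union> v ` {..<n}) \<le> card {bt, tp} + card (v ` {..<n})"
      by (rule card_Un_le)
    ultimately show ?thesis by linarith
  qed
  moreover have "card {bt, tp} \<le> 2" by (simp add: card_insert_le_m1)
  moreover have "card (v ` {..<n}) \<le> n" using card_image_le[of "{..<n}" v] by simp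
  moreover have "card (neg ` v ` {..<n}) \<le> n"
    using card_image_le[of "v ` {..<n}" neg] card_image_le[of "{..<n}" v] by simp
  ultimately show ?thesis by linarith
qed

lemma sA: "s \<in> S \<Longrightarrow> s \<in> A" using S_A by auto

lemma aa_le: assumes s: "s \<in> A" and s': "s' \<in> A" and l: "leF s s'" shows "aa s \<le> aa s'"
  unfolding aa_def using S_fin
  by (intro card_mono) (auto simp: lt_def intro: leF_trans[OF s s' _ l] dest: sA)
lemma bb_le: assumes s: "s \<in> A" and s': "s' \<in> A" and l: "leF s s'" shows "bb s' \<le> bb s"
  unfolding bb_def using S_fin
  by (intro card_mono) (auto simp: lt_def intro: leF_trans[OF _ s s' _ l] dest: sA)
lemma aa_lt: assumes s: "s \<in> S" and s': "s' \<in> S" and l: "lt s s'" shows "aa s < aa s'"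
proof -
  have "{t \<in> S. lt t s} \<subset> {t \<in> S. lt t s'}"
  proof
    have ss: "leF s s'" using l leF_total sA s s' unfolding lt_def by blast
    show "{t \<in> S. lt t s} \<subseteq> {t \<in> S. lt t s'}"
      using ss sA s s' unfolding lt_def by (auto intro: leF_trans)
    show "{t \<in> S. lt t s} \<noteq> {t \<in> S. lt t s'}" using s l leF_refl sA by (auto simp: lt_def)
  qed
  then show ?thesis unfolding aa_def using S_fin by (simp add: psubset_card_mono)
qed
lemma bb_lt: assumes s: "s \<in> S" and s': "s' \<in> S" and l: "lt s s'" shows "bb s' < bb s"
proof -
  have "{t \<in> S. lt s' t} \<subset> {t \<in> S. lt s t}"
  proof
    have ss: "leF s s'" using l leF_total sA s s' unfolding lt_def by blast
    show "{t \<in> S. lt s' t} \<subseteq> {t \<in> S. lt s t}"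
      using ss sA s s' unfolding lt_def by (auto intro: leF_trans)
    show "{t \<in> S. lt s' t} \<noteq> {t \<in> S. lt s t}" using s' l leF_refl sA by (auto simp: lt_def)
  qed
  then show ?thesis unfolding bb_def using S_fin by (simp add: psubset_card_mono)
qed

lemma K_pos: "0 < K"
proof -
  have "tp \<in> {t \<in> S. lt bt t}" using tp_S not_tp_bt by (simp add: lt_def)
  then have "{t \<in> S. lt bt t} \<noteq> {}" by blast
  then show ?thesis unfolding K_def bb_def using S_fin by (simp add: card_gt_0_iff)
qed

lemma h_mono: assumes "s \<in> A" "s' \<in> A" "leF s s'" shows "h s \<le> h s'"
proof -
  have "aa s \<le> aa s'" "bb s' \<le> bb s" using assms aa_le bb_le by auto
  then have "real (aa s) - real (bb s) + real K \<le> real (aa s') - real (bb s') + real K" by simp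
  then show ?thesis unfolding h_def using K_pos by (simp add: divide_right_mono)
qed
lemma h_strict: assumes "s \<in> S" "s' \<in> S" "lt s s'" shows "h s < h s'"
proof -
  have "aa s < aa s'" "bb s' < bb s" using assms aa_lt bb_lt by auto
  then have "real (aa s) - real (bb s) + real K < real (aa s') - real (bb s') + real K" by simp
  then show ?thesis unfolding h_def using K_pos by (simp add: divide_strict_right_mono)
qed
lemma h_le_iff: assumes "s \<in> S" "s' \<in> S" shows "h s \<le> h s' \<longleftrightarrow> leF s s'"
  using h_mono[of s s'] h_strict[of s' s] assms sA unfolding lt_def by force
lemma h_eq_iff: "s \<in> S \<Longrightarrow> s' \<in> S \<Longrightarrow> h s = h s' \<longleftrightarrow> eqF s s'"
  using h_le_iff[of s s'] h_le_iff[of s' s] unfolding eqF_def by auto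

lemma aa_neg: assumes s: "s \<in> S" shows "aa (neg s) = bb s"
proof -
  have sa: "s \<in> A" using s sA by simp
  have "{t \<in> S. lt t (neg s)} = neg ` {u \<in> S. lt s u}"
  proof (rule set_eqI, rule iffI)
    fix t assume t: "t \<in> {t \<in> S. lt t (neg s)}"
    then have tS: "t \<in> S" and ta: "t \<in> A" using sA by auto
    have "\<not> leF (neg s) t" using t by (simp add: lt_def)
    then have "\<not> leF (neg t) s" using neg_rev_iff[of "neg s" t] sa ta by simp
    then have "neg t \<in> {u \<in> S. lt s u}" using neg_S[OF tS] by (simp add: lt_def)
    then show "t \<in> neg ` {u \<in> S. lt s u}" using ta by (metis image_eqI neg_neg)
  next
    fix t assume "t \<in> neg ` {u \<in> S. lt s u}"
    then obtain u where u: "u \<in> S" "lt s u" and tu: "t = neg u" by blast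
    have ua: "u \<in> A" using u sA by simp
    have "\<not> leF u s" using u by (simp add: lt_def)
    then have "\<not> leF (neg s) (neg u)" using neg_rev_iff[of u s] sa ua by simp
    then show "t \<in> {t \<in> S. lt t (neg s)}" using tu neg_S[OF u(1)] by (simp add: lt_def)
  qed
  moreover have "inj_on neg {u \<in> S. lt s u}"
    by (rule inj_onI) (metis (no_types, lifting) mem_Collect_eq neg_neg sA)
  ultimately show ?thesis unfolding aa_def bb_def by (simp add: card_image)
qed
lemma bb_neg: "s \<in> S \<Longrightarrow> bb (neg s) = aa s"
  using aa_neg[of "neg s"] neg_S sA by simp
lemma h_neg: assumes "s \<in> S" shows "h (neg s) = 1 - h s"
proof -
  have "h (neg s) = (real (bb s) - real (aa s) + real K) / (2 * real K)"
    unfolding h_def using assms aa_neg bb_neg by simp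
  then show ?thesis unfolding h_def using K_pos by (simp add: field_simps)
qed
lemma aa_bt: "aa bt = 0"
proof -
  have "{t \<in> S. lt t bt} = {}" unfolding lt_def using bt_leF sA by blast
  then show ?thesis unfolding aa_def by (metis card.empty)
qed
lemma h_bt: "h bt = 0" unfolding h_def K_def using K_pos by (simp add: aa_bt)
lemma h_tp: "h tp = 1" using h_neg[OF bt_S] h_bt neg_bt by simp
lemma h_range: "s \<in> S \<Longrightarrow> 0 \<le> h s \<and> h s \<le> 1"
  using h_mono[of bt s] h_mono[of s tp] bt_leF leF_tp sA h_bt h_tp by auto

lemma h_Q: assumes s: "s \<in> S" shows "h s \<in> Qn n"
proof -
  have K1: "K \<le> card S" unfolding K_def bb_def using S_fin by (simp add: card_mono)
  have hr: "0 \<le> h s" "h s \<le> 1" using h_range[OF s] by auto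
  have Kp: "(0::real) < real K" using K_pos by simp
  have b_le: "bb s \<le> aa s + K"
  proof -
    have "0 \<le> real (aa s) - real (bb s) + real K"
      using hr(1) Kp unfolding h_def by (simp add: zero_le_divide_iff)
    then show ?thesis by linarith
  qed
  define k where "k = aa s + K - bb s"
  have rk: "real k = real (aa s) - real (bb s) + real K" unfolding k_def using b_le by (simp add: of_nat_diff)
  have hk: "h s = real k / real (2 * K)" unfolding h_def rk by simp
  have "k \<le> 2 * K"
  proof -
    have "real k / real (2 * K) \<le> 1" using hk hr by simp
    then have "real k \<le> real (2 * K)" using Kp by (simp add: divide_le_eq)
    then show ?thesis by linarith
  qed
  moreover have "2 * K \<le> 4 * n + 4" using K1 card_S by linarith
  ultimately show ?thesis unfolding Qn_def hk using K_pos
    by (intro CollectI exI[of _ k] exI[of _ "2 * K"]) simp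
qed

end


context pfv begin

lemma leF_via: "x \<in> A \<Longrightarrow> y \<in> A \<Longrightarrow> s1 \<in> S \<Longrightarrow> s2 \<in> S \<Longrightarrow> eqF x s1 \<Longrightarrow> eqF y s2 \<Longrightarrow>
  leF x y \<longleftrightarrow> leF s1 s2"
  unfolding eqF_def by (meson leF_trans sA)

lemma mt_step: assumes x: "x \<in> A" and y: "y \<in> A" and s1: "s1 \<in> S" and s2: "s2 \<in> S"
  and e1: "eqF x s1" and e2: "eqF y s2"
  shows "\<exists>s\<in>S. eqF (mt x y) s \<and> h s = min (h s1) (h s2)"
proof (cases "leF s1 s2")
  case True
  then have "leF x y" using leF_via[OF x y s1 s2 e1 e2] by simp
  then have "eqF (mt x y) s1" using mt_case1[OF x y] e1 eqF_trans x y sA s1 by (meson cl(1))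
  moreover have "h s1 \<le> h s2" using True h_le_iff s1 s2 by simp
  ultimately show ?thesis using s1 by (intro bexI[of _ s1]) auto
next
  case False
  then have F2: "leF s2 s1" using leF_total sA s1 s2 by blast
  then have "leF y x" using leF_via[OF y x s2 s1 e2 e1] by simp
  then have "eqF (mt x y) s2" using mt_case2[OF x y] e2 eqF_trans x y sA s2 by (meson cl(1))
  moreover have "h s2 \<le> h s1" using F2 h_le_iff s1 s2 by simp
  ultimately show ?thesis using s2 by (intro bexI[of _ s2]) auto
qed

lemma jn_step: assumes x: "x \<in> A" and y: "y \<in> A" and s1: "s1 \<in> S" and s2: "s2 \<in> S"
  and e1: "eqF x s1" and e2: "eqF y s2"
  shows "\<exists>s\<in>S. eqF (jn x y) s \<and> h s = max (h s1) (h s2)"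
proof (cases "leF s1 s2")
  case True
  then have "leF x y" using leF_via[OF x y s1 s2 e1 e2] by simp
  then have "eqF (jn x y) s2" using jn_case1[OF x y] e2 eqF_trans x y sA s2 by (meson cl(2))
  moreover have "h s1 \<le> h s2" using True h_le_iff s1 s2 by simp
  ultimately show ?thesis using s2 by (intro bexI[of _ s2]) auto
next
  case False
  then have F2: "leF s2 s1" using leF_total sA s1 s2 by blast
  then have "leF y x" using leF_via[OF y x s2 s1 e2 e1] by simp
  then have "eqF (jn x y) s1" using jn_case2[OF x y] e1 eqF_trans x y sA s1 by (meson cl(2))
  moreover have "h s2 \<le> h s1" using F2 h_le_iff s1 s2 by simp
  ultimately show ?thesis using s1 by (intro bexI[of _ s1]) auto
qed

lemma ev_main: "vars \<phi> \<subseteq> {..<n} \<Longrightarrow>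
  \<exists>s\<in>S. eqF (eval_alg mt jn cj im bt tp v \<phi>) s \<and> eval_std (\<lambda>i. h (v i)) \<phi> = h s"
proof (induction \<phi>)
  case (Var i)
  then have "v i \<in> S" by (simp add: v_S)
  then show ?case using vA by (intro bexI[of _ "v i"]) (auto simp: eqF_refl)
next
  case Bot then show ?case using bt_S h_bt by (intro bexI[of _ bt]) (auto simp: eqF_refl)
next
  case Top then show ?case using tp_S h_tp by (intro bexI[of _ tp]) (auto simp: eqF_refl)
next
  case (And a b)
  then obtain s1 s2 where s1: "s1 \<in> S" "eqF (eval_alg mt jn cj im bt tp v a) s1" "eval_std (\<lambda>i. h (v i)) a = h s1"
    and s2: "s2 \<in> S" "eqF (eval_alg mt jn cj im bt tp v b) s2" "eval_std (\<lambda>i. h (v i)) b = h s2" by auto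
  show ?case using mt_step[OF eval_in eval_in s1(1) s2(1) s1(2) s2(2)] vA s1(3) s2(3) by (simp, metis)
next
  case (Or a b)
  then obtain s1 s2 where s1: "s1 \<in> S" "eqF (eval_alg mt jn cj im bt tp v a) s1" "eval_std (\<lambda>i. h (v i)) a = h s1"
    and s2: "s2 \<in> S" "eqF (eval_alg mt jn cj im bt tp v b) s2" "eval_std (\<lambda>i. h (v i)) b = h s2" by auto
  show ?case using jn_step[OF eval_in eval_in s1(1) s2(1) s1(2) s2(2)] vA s1(3) s2(3) by (simp, metis)
next
  case (Conj a b)
  then obtain s1 s2 where s1: "s1 \<in> S" "eqF (eval_alg mt jn cj im bt tp v a) s1" "eval_std (\<lambda>i. h (v i)) a = h s1"
    and s2: "s2 \<in> S" "eqF (eval_alg mt jn cj im bt tp v b) s2" "eval_std (\<lambda>i. h (v i)) b = h s2" by auto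
  define x where "x = eval_alg mt jn cj im bt tp v a"
  define y where "y = eval_alg mt jn cj im bt tp v b"
  have x: "x \<in> A" and y: "y \<in> A" unfolding x_def y_def using vA by (simp_all add: eval_in)
  have e1: "eqF x s1" and e2: "eqF y s2" using s1 s2 x_def y_def by simp_all
  have ns2: "neg s2 \<in> S" using neg_S s2 by simp
  have en: "eqF (neg y) (neg s2)" using neg_cong[OF y _ e2] sA s2 by simp
  have iff: "leF x (neg y) \<longleftrightarrow> leF s1 (neg s2)" using leF_via[OF x _ s1(1) ns2 e1 en] y by simp
  have hn: "h (neg s2) = 1 - h s2" using h_neg s2 by simp
  show ?case
  proof (cases "leF s1 (neg s2)")
    case True
    then have "eqF (cj x y) bt" using cj_case1[OF x y] iff by simp
    moreover have "h s1 + h s2 \<le> 1" using True h_le_iff[OF s1(1) ns2] hn by simp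
    ultimately show ?thesis using bt_S h_bt s1(3) s2(3) unfolding x_def y_def
      by (intro bexI[of _ bt]) (auto simp: std_conj_def)
  next
    case False
    then have c: "eqF (cj x y) (mt x y)" using cj_case2[OF x y] iff by simp
    have gt: "h s1 + h s2 > 1" using False h_le_iff[OF s1(1) ns2] hn by simp
    obtain s where s: "s \<in> S" "eqF (mt x y) s" "h s = min (h s1) (h s2)"
      using mt_step[OF x y s1(1) s2(1) e1 e2] by blast
    have "eqF (cj x y) s" using eqF_trans[OF _ _ _ c s(2)] x y sA s(1) by simp
    then show ?thesis using s gt s1(3) s2(3) unfolding x_def y_def
      by (intro bexI[of _ s]) (auto simp: std_conj_def)
  qed
next
  case (Imp a b)
  then obtain s1 s2 where s1: "s1 \<in> S" "eqF (eval_alg mt jn cj im bt tp v a) s1" "eval_std (\<lambda>i. h (v i)) a = h s1"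
    and s2: "s2 \<in> S" "eqF (eval_alg mt jn cj im bt tp v b) s2" "eval_std (\<lambda>i. h (v i)) b = h s2" by auto
  define x where "x = eval_alg mt jn cj im bt tp v a"
  define y where "y = eval_alg mt jn cj im bt tp v b"
  have x: "x \<in> A" and y: "y \<in> A" unfolding x_def y_def using vA by (simp_all add: eval_in)
  have e1: "eqF x s1" and e2: "eqF y s2" using s1 s2 x_def y_def by simp_all
  have iff: "leF x y \<longleftrightarrow> leF s1 s2" using leF_via[OF x y s1(1) s2(1) e1 e2] by simp
  show ?case
  proof (cases "leF s1 s2")
    case True
    then have "eqF (im x y) tp" using im_case1[OF x y] iff by simp
    moreover have "h s1 \<le> h s2" using True h_le_iff[OF s1(1) s2(1)] by simp
    ultimately show ?thesis using tp_S h_tp s1(3) s2(3) unfolding x_def y_def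
      by (intro bexI[of _ tp]) (auto simp: std_imp_def)
  next
    case False
    then have c: "eqF (im x y) (neg (mt x (neg y)))" using im_case2[OF x y] iff by simp
    have gt: "\<not> h s1 \<le> h s2" using False h_le_iff[OF s1(1) s2(1)] by simp
    have ns2: "neg s2 \<in> S" using neg_S s2 by simp
    have en: "eqF (neg y) (neg s2)" using neg_cong[OF y _ e2] sA s2 by simp
    obtain s where s: "s \<in> S" "eqF (mt x (neg y)) s" "h s = min (h s1) (h (neg s2))"
      using mt_step[OF x _ s1(1) ns2 e1 en] y by auto
    have ns: "neg s \<in> S" using neg_S s by simp
    have "eqF (neg (mt x (neg y))) (neg s)" using neg_cong[OF _ _ s(2)] x y sA s(1) by simp
    then have "eqF (im x y) (neg s)" using eqF_trans[OF _ _ _ c] x y sA ns by simp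
    moreover have "h (neg s) = max (1 - h s1) (h s2)" using h_neg[OF s(1)] s(3) h_neg[OF s2(1)] by simp
    ultimately show ?thesis using ns gt s1(3) s2(3) unfolding x_def y_def
      by (intro bexI[of _ "neg s"]) (auto simp: std_imp_def)
  qed
qed

end

context nmA begin

lemma complete_le:
  assumes vA: "\<And>i. v i \<in> A" and p: "vars \<phi> \<subseteq> {..<n}" and q: "vars \<psi> \<subseteq> {..<n}"
  and agree: "\<And>\<mu>. (\<And>i. \<mu> i \<in> Qn n) \<Longrightarrow> eval_std \<mu> \<phi> = eval_std \<mu> \<psi>"
  shows "le (eval_alg mt jn cj im bt tp v \<phi>) (eval_alg mt jn cj im bt tp v \<psi>)"
proof (rule ccontr)
  define x where "x = eval_alg mt jn cj im bt tp v \<phi>"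
  define y where "y = eval_alg mt jn cj im bt tp v \<psi>"
  have x: "x \<in> A" and y: "y \<in> A" unfolding x_def y_def using vA by (simp_all add: eval_in)
  assume "\<not> le (eval_alg mt jn cj im bt tp v \<phi>) (eval_alg mt jn cj im bt tp v \<psi>)"
  then have "im x y \<noteq> tp" using le_im x y x_def y_def by simp
  then obtain F where F: "filt F" "im x y \<notin> F" "\<forall>x\<in>A. \<forall>y\<in>A. im x y \<in> F \<or> im y x \<in> F"
    using exists_prime[of "im x y"] x y by auto
  have "bt \<notin> F"
  proof
    assume "bt \<in> F"
    then have "im x y \<in> F" using F(1) x y bt_le unfolding filt_def by (meson cl(4))
    then show False using F(2) by simp
  qed
  then interpret P: pfv A mt jn cj im bt tp F n v
    using F vA by unfold_locales auto
  obtain s1 where s1: "s1 \<in> P.S" "P.eqF x s1" "eval_std (\<lambda>i. P.h (v i)) \<phi> = P.h s1"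
    using P.ev_main[OF p] x_def by blast
  obtain s2 where s2: "s2 \<in> P.S" "P.eqF y s2" "eval_std (\<lambda>i. P.h (v i)) \<psi> = P.h s2"
    using P.ev_main[OF q] y_def by blast
  define \<mu> where "\<mu> i = (if i < n then P.h (v i) else 0)" for i
  have mQ: "\<mu> i \<in> Qn n" for i
  proof (cases "i < n")
    case True then show ?thesis unfolding \<mu>_def using P.h_Q P.v_S by simp
  next
    case False
    have "(0::real) = real 0 / real 1" by simp
    then have "(0::real) \<in> Qn n" unfolding Qn_def by fastforce
    then show ?thesis unfolding \<mu>_def using False by simp
  qed
  have "eval_std \<mu> \<phi> = eval_std (\<lambda>i. P.h (v i)) \<phi>"
    using p by (intro eval_std_cong) (auto simp: \<mu>_def)
  moreover have "eval_std \<mu> \<psi> = eval_std (\<lambda>i. P.h (v i)) \<psi>"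
    using q by (intro eval_std_cong) (auto simp: \<mu>_def)
  ultimately have "P.h s1 = P.h s2" using agree[OF mQ] s1(3) s2(3) by simp
  then have "P.eqF s1 s2" using P.h_eq_iff s1(1) s2(1) by simp
  then have "P.eqF x y" using P.eqF_trans P.eqF_sym s1 s2 x y P.sA by meson
  then have "im x y \<in> F" unfolding P.eqF_def P.leF_def by simp
  then show False using F(2) by simp
qed

lemma complete:
  assumes vA: "\<And>i. v i \<in> A" and p: "vars \<phi> \<subseteq> {..<n}" and q: "vars \<psi> \<subseteq> {..<n}"
  and agree: "\<And>\<mu>. (\<And>i. \<mu> i \<in> Qn n) \<Longrightarrow> eval_std \<mu> \<phi> = eval_std \<mu> \<psi>"
  shows "eval_alg mt jn cj im bt tp v \<phi> = eval_alg mt jn cj im bt tp v \<psi>"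
  using complete_le[OF vA p q agree] complete_le[OF vA q p agree[symmetric]] vA
  by (simp add: eval_in le_antisym)

end


lemma sc_bt: "0 \<le> (x::real) \<Longrightarrow> max x 0 = x" by simp
lemma sc_tp: "(x::real) \<le> 1 \<Longrightarrow> min x 1 = x" by simp
lemma sc_comm: "std_conj x y = std_conj y x" by (auto simp: std_conj_def)
lemma sc_assoc: "0 \<le> x \<Longrightarrow> 0 \<le> y \<Longrightarrow> 0 \<le> z \<Longrightarrow> x \<le> 1 \<Longrightarrow> y \<le> 1 \<Longrightarrow> z \<le> 1 \<Longrightarrow>
  std_conj x (std_conj y z) = std_conj (std_conj x y) z" by (auto simp: std_conj_def)
lemma sc_unit: "0 \<le> x \<Longrightarrow> x \<le> 1 \<Longrightarrow> std_conj x 1 = x" by (auto simp: std_conj_def)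
lemma sc_res: "0 \<le> x \<Longrightarrow> 0 \<le> y \<Longrightarrow> 0 \<le> z \<Longrightarrow> x \<le> 1 \<Longrightarrow> y \<le> 1 \<Longrightarrow> z \<le> 1 \<Longrightarrow>
  (min (std_conj x y) z = std_conj x y) = (min x (std_imp y z) = x)"
  by (auto simp: std_conj_def std_imp_def min_def max_def)
lemma sc_prelin: "0 \<le> x \<Longrightarrow> 0 \<le> y \<Longrightarrow> x \<le> 1 \<Longrightarrow> y \<le> 1 \<Longrightarrow> max (std_imp x y) (std_imp y x) = 1" by (auto simp: std_imp_def)
lemma sc_nm: "0 \<le> x \<Longrightarrow> 0 \<le> y \<Longrightarrow> x \<le> 1 \<Longrightarrow> y \<le> 1 \<Longrightarrow>
  max (std_imp (std_conj x y) 0) (std_imp (min x y) (std_conj x y)) = 1"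
  by (auto simp: std_conj_def std_imp_def)
lemma sc_inv: "0 \<le> x \<Longrightarrow> x \<le> 1 \<Longrightarrow> std_imp (std_imp x 0) 0 = x" by (auto simp: std_imp_def)

lemma std_nm:
  fixes Q :: "real set"
  assumes Q01: "Q \<subseteq> {0..1}" and z: "0 \<in> Q" and o1: "1 \<in> Q"
    and cl: "\<And>x y. x \<in> Q \<Longrightarrow> y \<in> Q \<Longrightarrow> min x y \<in> Q \<and> max x y \<in> Q \<and> std_conj x y \<in> Q \<and> std_imp x y \<in> Q"
  shows "nm_algebra Q min max std_conj std_imp 0 1"
proof -
  have r1[simp]: "\<And>x. x \<in> Q \<Longrightarrow> 0 \<le> x" and r2[simp]: "\<And>x. x \<in> Q \<Longrightarrow> x \<le> 1" using Q01 by auto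
  show ?thesis unfolding nm_algebra_def
    apply (intro conjI ballI; ((rule sc_bt sc_tp sc_comm sc_assoc sc_unit sc_res sc_prelin sc_nm sc_inv; simp; fail)?))
    using z o1 cl by (auto simp: min_def max_def)
qed

lemma nm_transfer:
  assumes nm: "nm_algebra Q mt jn cj im bt tp" and inj: "inj_on f Q"
  defines "g \<equiv> inv_into Q f"
  shows "nm_algebra (f ` Q) (\<lambda>a b. f (mt (g a) (g b))) (\<lambda>a b. f (jn (g a) (g b)))
     (\<lambda>a b. f (cj (g a) (g b))) (\<lambda>a b. f (im (g a) (g b))) (f bt) (f tp)"
proof -
  have gf[simp]: "\<And>x. x \<in> Q \<Longrightarrow> g (f x) = x" unfolding g_def using inj by (simp add: inv_into_f_f)
  have fe[simp]: "\<And>x y. x \<in> Q \<Longrightarrow> y \<in> Q \<Longrightarrow> f x = f y \<longleftrightarrow> x = y" using inj by (simp add: inj_on_eq_iff)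
  interpret nmA Q mt jn cj im bt tp using nm by unfold_locales
  show ?thesis
  unfolding nm_algebra_def
  apply (intro conjI ballI; (elim imageE)?; simp)
  apply (rule mt_comm jn_comm cj_comm mt_assoc jn_assoc cj_assoc absorb1 absorb2 jn_bt mt_tp cj_tp resid0 prelin nmax invol; assumption)+
  done
qed

lemma eval_transfer:
  assumes nm: "nm_algebra Q mt jn cj im bt tp" and inj: "inj_on f Q" and vQ: "\<And>i. v i \<in> Q"
  defines "g \<equiv> inv_into Q f"
  shows "eval_alg (\<lambda>a b. f (mt (g a) (g b))) (\<lambda>a b. f (jn (g a) (g b)))
     (\<lambda>a b. f (cj (g a) (g b))) (\<lambda>a b. f (im (g a) (g b))) (f bt) (f tp) (\<lambda>i. f (v i)) \<phi>
    = f (eval_alg mt jn cj im bt tp v \<phi>)"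
proof -
  have gf[simp]: "\<And>x. x \<in> Q \<Longrightarrow> g (f x) = x" unfolding g_def using inj by (simp add: inv_into_f_f)
  interpret nmA Q mt jn cj im bt tp using nm by unfold_locales
  show ?thesis by (induction \<phi>) (simp_all add: vQ eval_in)
qed

lemma soundness:
  fixes Q :: "real set"
  assumes Q01: "Q \<subseteq> {0..1}" and z: "0 \<in> Q" and o: "1 \<in> Q" and fin: "finite Q"
    and cl: "\<And>x y. x \<in> Q \<Longrightarrow> y \<in> Q \<Longrightarrow> min x y \<in> Q \<and> max x y \<in> Q \<and> std_conj x y \<in> Q \<and> std_imp x y \<in> Q"
    and eq: "\<phi> \<equiv>\<^sub>N\<^sub>M \<psi>" and mu: "\<And>i. \<mu> i \<in> Q"
  shows "eval_std \<mu> \<phi> = eval_std \<mu> \<psi>"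
proof -
  have nm: "nm_algebra Q min max std_conj std_imp 0 1" using std_nm[OF Q01 z o cl] by blast
  obtain f :: "real \<Rightarrow> nat" where inj: "inj_on f Q"
    using fin finite_imp_inj_to_nat_seg by blast
  define g where "g = inv_into Q f"
  have "eval_alg (\<lambda>a b. f (min (g a) (g b))) (\<lambda>a b. f (max (g a) (g b)))
     (\<lambda>a b. f (std_conj (g a) (g b))) (\<lambda>a b. f (std_imp (g a) (g b))) (f 0) (f 1) (\<lambda>i. f (\<mu> i)) \<phi>
    = eval_alg (\<lambda>a b. f (min (g a) (g b))) (\<lambda>a b. f (max (g a) (g b)))
     (\<lambda>a b. f (std_conj (g a) (g b))) (\<lambda>a b. f (std_imp (g a) (g b))) (f 0) (f 1) (\<lambda>i. f (\<mu> i)) \<psi>"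
  proof -
    have key: "\<And>(A::nat set) mt jn cj im bt tp v. nm_algebra A mt jn cj im bt tp \<Longrightarrow> (\<forall>i. v i \<in> A) \<Longrightarrow>
        eval_alg mt jn cj im bt tp v \<phi> = eval_alg mt jn cj im bt tp v \<psi>"
      using eq unfolding nm_equiv_def by blast
    show ?thesis using key[OF nm_transfer[OF nm inj]] mu unfolding g_def by simp
  qed
  then have "f (eval_std \<mu> \<phi>) = f (eval_std \<mu> \<psi>)"
    unfolding eval_std_def g_def using eval_transfer[OF nm inj mu] by simp
  moreover have "eval_std \<mu> \<phi> \<in> Q" "eval_std \<mu> \<psi> \<in> Q"
    unfolding eval_std_def using nmA.eval_in[of Q] nm mu by (simp_all add: nmA_def)
  ultimately show ?thesis using inj by (simp add: inj_on_eq_iff)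
qed


lemma Qn_sub: "Qn n \<subseteq> (\<lambda>(k,m). real k / real m) ` ({..4*n+4} \<times> {..4*n+4})"
  unfolding Qn_def by (auto intro!: image_eqI[of _ _ "(k, m)" for k m])
lemma Qn_fin: "finite (Qn n)" using Qn_sub finite_subset by blast
lemma Qn_01: "x \<in> Qn n \<Longrightarrow> 0 \<le> x \<and> x \<le> 1"
  unfolding Qn_def by (auto simp: divide_le_eq_1)
lemma Qn_I: "0 < m \<Longrightarrow> m \<le> 4*n+4 \<Longrightarrow> k \<le> m \<Longrightarrow> real k / real m \<in> Qn n"
  unfolding Qn_def by blast
lemma Qn_0: "0 \<in> Qn n" using Qn_I[of 1 n 0] by simp
lemma Qn_1: "1 \<in> Qn n" using Qn_I[of 1 n 1] by simp
lemma Qn_half: "1/2 \<in> Qn n" using Qn_I[of 2 n 1] by simp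
lemma Qn_neg: "x \<in> Qn n \<Longrightarrow> 1 - x \<in> Qn n"
proof -
  assume "x \<in> Qn n"
  then obtain k m where km: "x = real k / real m" "0 < m" "m \<le> 4*n+4" "k \<le> m" unfolding Qn_def by blast
  then have "1 - x = real (m - k) / real m" by (simp add: of_nat_diff field_simps)
  then show ?thesis using km Qn_I[of m n "m - k"] by simp
qed
lemma Qn_cl: "x \<in> Qn n \<Longrightarrow> y \<in> Qn n \<Longrightarrow>
  min x y \<in> Qn n \<and> max x y \<in> Qn n \<and> std_conj x y \<in> Qn n \<and> std_imp x y \<in> Qn n"
  by (auto simp: min_def max_def std_conj_def std_imp_def Qn_0 Qn_1 Qn_neg)

lemma eval_Qn: "(\<And>i. i \<in> vars \<phi> \<Longrightarrow> \<mu> i \<in> Qn n) \<Longrightarrow> eval_std \<mu> \<phi> \<in> Qn n"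
  by (induction \<phi>) (auto simp: Qn_0 Qn_1 Qn_cl)

definition agree :: "nat \<Rightarrow> form \<Rightarrow> form \<Rightarrow> bool" where
  "agree n \<phi> \<psi> \<longleftrightarrow> (\<forall>\<mu>. (\<forall>i. \<mu> i \<in> Qn n) \<longrightarrow> eval_std \<mu> \<phi> = eval_std \<mu> \<psi>)"

lemma Fm_simps[simp]:
  "Var i \<in> Fm n \<longleftrightarrow> i < n" "Bot \<in> Fm n" "Top \<in> Fm n"
  "And a b \<in> Fm n \<longleftrightarrow> a \<in> Fm n \<and> b \<in> Fm n" "Or a b \<in> Fm n \<longleftrightarrow> a \<in> Fm n \<and> b \<in> Fm n"
  "Conj a b \<in> Fm n \<longleftrightarrow> a \<in> Fm n \<and> b \<in> Fm n" "Imp a b \<in> Fm n \<longleftrightarrow> a \<in> Fm n \<and> b \<in> Fm n"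
  by (auto simp: Fm_def)

lemma equiv_iff: assumes "\<phi> \<in> Fm n" "\<psi> \<in> Fm n" shows "\<phi> \<equiv>\<^sub>N\<^sub>M \<psi> \<longleftrightarrow> agree n \<phi> \<psi>"
proof
  assume e: "\<phi> \<equiv>\<^sub>N\<^sub>M \<psi>"
  have Q01: "Qn n \<subseteq> {0..1}" using Qn_01 by fastforce
  show "agree n \<phi> \<psi>" unfolding agree_def
    using soundness[of "Qn n", OF Q01 Qn_0 Qn_1 Qn_fin Qn_cl e] by blast
next
  assume a: "agree n \<phi> \<psi>"
  show "\<phi> \<equiv>\<^sub>N\<^sub>M \<psi>" unfolding nm_equiv_def
  proof (intro allI impI)
    fix A :: "nat set" and mt jn cj im bt tp and v :: "nat \<Rightarrow> nat"
    assume nm: "nm_algebra A mt jn cj im bt tp" and vA: "\<forall>i. v i \<in> A"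
    interpret nmA A mt jn cj im bt tp using nm by unfold_locales
    show "eval_alg mt jn cj im bt tp v \<phi> = eval_alg mt jn cj im bt tp v \<psi>"
      using complete[of v \<phi> n \<psi>] vA assms a unfolding agree_def Fm_def by blast
  qed
qed

lemma cls_agree: "\<phi> \<in> Fm n \<Longrightarrow> cls n \<phi> = {\<chi> \<in> Fm n. agree n \<chi> \<phi>}"
  unfolding cls_def using equiv_iff by blast

lemma cls_eq: assumes "\<phi> \<in> Fm n" "\<psi> \<in> Fm n" shows "cls n \<phi> = cls n \<psi> \<longleftrightarrow> agree n \<phi> \<psi>"
proof
  assume "cls n \<phi> = cls n \<psi>"
  moreover have "\<phi> \<in> cls n \<phi>" using assms unfolding cls_agree[OF assms(1)] agree_def by simp
  ultimately have "\<phi> \<in> cls n \<psi>" by simp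
  then show "agree n \<phi> \<psi>" unfolding cls_agree[OF assms(2)] by simp
next
  assume a: "agree n \<phi> \<psi>"
  show "cls n \<phi> = cls n \<psi>" unfolding cls_agree[OF assms(1)] cls_agree[OF assms(2)]
    using a unfolding agree_def by auto
qed

lemma agree_at: assumes a: "agree n \<phi> \<psi>" and p: "\<phi> \<in> Fm n" and q: "\<psi> \<in> Fm n"
  and mu: "\<And>i. i < n \<Longrightarrow> \<mu> i \<in> Qn n"
  shows "eval_std \<mu> \<phi> = eval_std \<mu> \<psi>"
proof -
  define \<mu>' where "\<mu>' i = (if i < n then \<mu> i else 0)" for i
  have "\<forall>i. \<mu>' i \<in> Qn n" using mu Qn_0 by (simp add: \<mu>'_def)
  then have "eval_std \<mu>' \<phi> = eval_std \<mu>' \<psi>" using a unfolding agree_def by blast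
  moreover have "eval_std \<mu>' \<phi> = eval_std \<mu> \<phi>" using p by (intro eval_std_cong) (auto simp: \<mu>'_def Fm_def)
  moreover have "eval_std \<mu>' \<psi> = eval_std \<mu> \<psi>" using q by (intro eval_std_cong) (auto simp: \<mu>'_def Fm_def)
  ultimately show ?thesis by simp
qed

lemma not_agree: assumes na: "\<not> agree n \<phi> \<psi>"
  shows "\<exists>\<mu>. (\<forall>i. \<mu> i \<in> Qn n) \<and> eval_std \<mu> \<phi> \<noteq> eval_std \<mu> \<psi>"
  using na unfolding agree_def by blast

lemma agree_T: assumes p: "\<phi> \<in> Fm n" and q: "\<psi> \<in> Fm n"
  shows "agree n \<phi> \<psi> \<longleftrightarrow> (\<forall>\<mu> \<in> {..<n} \<rightarrow>\<^sub>E Qn n. eval_std \<mu> \<phi> = eval_std \<mu> \<psi>)"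
proof
  assume "agree n \<phi> \<psi>" then show "\<forall>\<mu> \<in> {..<n} \<rightarrow>\<^sub>E Qn n. eval_std \<mu> \<phi> = eval_std \<mu> \<psi>"
    using agree_at p q by (auto simp: PiE_def Pi_def)
next
  assume T: "\<forall>\<mu> \<in> {..<n} \<rightarrow>\<^sub>E Qn n. eval_std \<mu> \<phi> = eval_std \<mu> \<psi>"
  show "agree n \<phi> \<psi>" unfolding agree_def
  proof (intro allI impI)
    fix \<mu> :: "nat \<Rightarrow> real" assume mu: "\<forall>i. \<mu> i \<in> Qn n"
    define \<mu>' where "\<mu>' = restrict \<mu> {..<n}"
    have "\<mu>' \<in> {..<n} \<rightarrow>\<^sub>E Qn n" using mu by (simp add: \<mu>'_def)
    then have "eval_std \<mu>' \<phi> = eval_std \<mu>' \<psi>" using T by blast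
    moreover have "eval_std \<mu>' \<phi> = eval_std \<mu> \<phi>" using p by (intro eval_std_cong) (auto simp: \<mu>'_def Fm_def)
    moreover have "eval_std \<mu>' \<psi> = eval_std \<mu> \<psi>" using q by (intro eval_std_cong) (auto simp: \<mu>'_def Fm_def)
    ultimately show "eval_std \<mu> \<phi> = eval_std \<mu> \<psi>" by simp
  qed
qed


definition cset :: "nat \<Rightarrow> form \<Rightarrow> (nat \<Rightarrow> real) set" where
  "cset n \<phi> = {\<mu> \<in> {..<n} \<rightarrow>\<^sub>E {0, 1/2, 1}. eval_std \<mu> \<phi> = 1}"
definition cnt :: "nat \<Rightarrow> form \<Rightarrow> nat" where "cnt n \<phi> = card (cset n \<phi>)"

lemma P3_fin: "finite ({..<(n::nat)} \<rightarrow>\<^sub>E {0, 1/2, 1::real})" by (intro finite_PiE) auto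
lemma cset_fin: "finite (cset n \<phi>)" unfolding cset_def using P3_fin by simp
lemma P3_Q: "\<mu> \<in> {..<n} \<rightarrow>\<^sub>E {0, 1/2, 1::real} \<Longrightarrow> i < n \<Longrightarrow> \<mu> i \<in> Qn n"
proof -
  assume "\<mu> \<in> {..<n} \<rightarrow>\<^sub>E {0, 1/2, 1::real}" "i < n"
  then have "\<mu> i \<in> {0, 1/2, 1}" by (auto simp: PiE_def Pi_def)
  then have "\<mu> i = 0 \<or> \<mu> i = 1/2 \<or> \<mu> i = 1" by blast
  then show ?thesis
  proof (elim disjE)
    assume h: "\<mu> i = 0" show ?thesis using Qn_0[of n] by (simp only: h)
  next
    assume h: "\<mu> i = 1/2" show ?thesis using Qn_half[of n] by (simp only: h)
  next
    assume h: "\<mu> i = 1" show ?thesis using Qn_1[of n] by (simp only: h)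
  qed
qed

lemma eval01: assumes "\<phi> \<in> Fm n" "\<And>i. i < n \<Longrightarrow> \<mu> i \<in> Qn n"
  shows "0 \<le> eval_std \<mu> \<phi> \<and> eval_std \<mu> \<phi> \<le> 1"
proof -
  have "eval_std \<mu> \<phi> \<in> Qn n" using assms by (intro eval_Qn) (auto simp: Fm_def)
  then show ?thesis by (rule Qn_01)
qed

lemma cset_agree: "agree n \<phi> \<psi> \<Longrightarrow> \<phi> \<in> Fm n \<Longrightarrow> \<psi> \<in> Fm n \<Longrightarrow> cset n \<phi> = cset n \<psi>"
proof -
  assume a: "agree n \<phi> \<psi>" and p: "\<phi> \<in> Fm n" and q: "\<psi> \<in> Fm n"
  have "\<And>\<mu>. \<mu> \<in> {..<n} \<rightarrow>\<^sub>E {0, 1/2, 1} \<Longrightarrow> eval_std \<mu> \<phi> = eval_std \<mu> \<psi>"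
    using agree_at[OF a p q] P3_Q by blast
  then show ?thesis unfolding cset_def by auto
qed

definition fv :: "nat \<Rightarrow> form set \<Rightarrow> real" where
  "fv n X = (if X \<in> NM_free n then real (cnt n (SOME \<phi>. \<phi> \<in> Fm n \<and> X = cls n \<phi>)) else 0)"

lemma fv_cls: assumes p: "\<phi> \<in> Fm n" shows "fv n (cls n \<phi>) = real (cnt n \<phi>)"
proof -
  have mem: "cls n \<phi> \<in> NM_free n" using p unfolding NM_free_def by blast
  define \<phi>' where "\<phi>' = (SOME \<phi>'. \<phi>' \<in> Fm n \<and> cls n \<phi> = cls n \<phi>')"
  have "\<phi>' \<in> Fm n \<and> cls n \<phi> = cls n \<phi>'" unfolding \<phi>'_def
    by (rule someI[where P="\<lambda>\<phi>'. \<phi>' \<in> Fm n \<and> cls n \<phi> = cls n \<phi>'" and x=\<phi>]) (simp add: p)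
  then have "agree n \<phi>' \<phi>" using cls_eq p by metis
  then have "cnt n \<phi>' = cnt n \<phi>" unfolding cnt_def using cset_agree p \<open>\<phi>' \<in> Fm n \<and> _\<close> by metis
  then show ?thesis using mem unfolding fv_def \<phi>'_def by simp
qed

lemma eval01_P3: "\<phi> \<in> Fm n \<Longrightarrow> \<mu> \<in> {..<n} \<rightarrow>\<^sub>E {0, 1/2, 1} \<Longrightarrow> 0 \<le> eval_std \<mu> \<phi> \<and> eval_std \<mu> \<phi> \<le> 1"
  using eval01 P3_Q by blast

lemma cnt_val: assumes p: "\<phi> \<in> Fm n" and q: "\<psi> \<in> Fm n"
  shows "cnt n \<phi> + cnt n \<psi> = cnt n (Or \<phi> \<psi>) + cnt n (And \<phi> \<psi>)"
proof -
  have "cset n (Or \<phi> \<psi>) = cset n \<phi> \<union> cset n \<psi>"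
    unfolding cset_def using eval01_P3[OF p] eval01_P3[OF q] by (auto simp: max_def dest: order_antisym)
  moreover have "cset n (And \<phi> \<psi>) = cset n \<phi> \<inter> cset n \<psi>"
    unfolding cset_def using eval01_P3[OF p] eval01_P3[OF q] by (auto simp: min_def dest: order_antisym)
  ultimately show ?thesis unfolding cnt_def using card_Un_Int[OF cset_fin cset_fin] by simp
qed

lemma fv_valuation: "is_valuation n (fv n)"
  unfolding is_valuation_def using fv_cls cnt_val
  by (metis (no_types, lifting) Fm_simps(4,5) of_nat_add)

lemma fv_bot: "fv n (cls n Bot) = 0"
proof -
  have "cset n Bot = {}" unfolding cset_def by simp
  then show ?thesis using fv_cls[of Bot n] by (simp add: cnt_def)
qed


lemma imp_one_or: "std_imp u w = 1 \<or> std_imp w u = 1" by (auto simp: std_imp_def)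
lemma imp_le1: "0 \<le> u \<Longrightarrow> w \<le> 1 \<Longrightarrow> std_imp u w \<le> 1" by (auto simp: std_imp_def)

lemma split_JI:
  assumes ji: "join_irreducible n (cls n g)" and g: "g \<in> Fm n" and p: "p \<in> Fm n" and q: "q \<in> Fm n"
  shows "agree n g (And g (Imp p q)) \<or> agree n g (And g (Imp q p))"
proof -
  have ag: "agree n g (Or (And g (Imp p q)) (And g (Imp q p)))" unfolding agree_def
  proof (intro allI impI)
    fix \<mu> :: "nat \<Rightarrow> real" assume mu: "\<forall>i. \<mu> i \<in> Qn n"
    have r: "0 \<le> eval_std \<mu> g \<and> eval_std \<mu> g \<le> 1" using eval01[OF g] mu by blast
    have rp: "0 \<le> eval_std \<mu> p \<and> eval_std \<mu> p \<le> 1" using eval01[OF p] mu by blast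
    have rq: "0 \<le> eval_std \<mu> q \<and> eval_std \<mu> q \<le> 1" using eval01[OF q] mu by blast
    show "eval_std \<mu> g = eval_std \<mu> (Or (And g (Imp p q)) (And g (Imp q p)))"
      using imp_one_or[of "eval_std \<mu> p" "eval_std \<mu> q"] r by auto
  qed
  have gO: "Or (And g (Imp p q)) (And g (Imp q p)) \<in> Fm n" using g p q by simp
  have "cls n g = cls n (Or (And g (Imp p q)) (And g (Imp q p)))" using cls_eq[OF g gO] ag by simp
  then have "cls n g = cls n (And g (Imp p q)) \<or> cls n g = cls n (And g (Imp q p))"
    using ji g p q unfolding join_irreducible_def by simp
  then show ?thesis using cls_eq g p q by simp
qed

lemma sep: assumes a: "a \<in> {0, 1/2, 1::real}" and c: "c \<in> {0, 1/2, 1::real}" and ac: "a \<noteq> c"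
  shows "\<exists>p q. vars p \<subseteq> {i} \<and> vars q \<subseteq> {i} \<and>
     (\<forall>\<mu>. \<mu> i = c \<longrightarrow> eval_std \<mu> q < eval_std \<mu> p) \<and> (\<forall>\<mu>. \<mu> i = a \<longrightarrow> eval_std \<mu> p < eval_std \<mu> q)"
proof -
  define x where "x = Var i"
  define N where "N z = Imp z Bot" for z
  have vx: "vars x \<subseteq> {i}" by (simp add: x_def)
  have A: "a = 0 \<or> a = 1/2 \<or> a = 1" and C: "c = 0 \<or> c = 1/2 \<or> c = 1" using a c by auto
  show ?thesis
  proof (cases "a = 1 \<and> c = 0")
    case True show ?thesis using True
      by (intro exI[of _ "N x"] exI[of _ x]) (simp add: N_def x_def std_imp_def)
  next
    case F1: False show ?thesis
    proof (cases "a = 0 \<and> c = 1")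
      case True show ?thesis using True
        by (intro exI[of _ x] exI[of _ "N x"]) (simp add: N_def x_def std_imp_def)
    next
      case F2: False show ?thesis
      proof (cases "a = 1 \<and> c = 1/2")
        case True show ?thesis using True
          by (intro exI[of _ "N x"] exI[of _ "Conj x x"]) (simp add: N_def x_def std_imp_def std_conj_def)
      next
        case F3: False show ?thesis
        proof (cases "a = 1/2 \<and> c = 1")
          case True show ?thesis using True
            by (intro exI[of _ "Conj x x"] exI[of _ "N x"]) (simp add: N_def x_def std_imp_def std_conj_def)
        next
          case F4: False show ?thesis
          proof (cases "a = 0 \<and> c = 1/2")
            case True show ?thesis using True
              by (intro exI[of _ "N (Conj (N x) (N x))"] exI[of _ "N x"]) (simp add: N_def x_def std_imp_def std_conj_def)
          next
            case F5: False
            then have "a = 1/2 \<and> c = 0" using A C ac F1 F2 F3 F4 by auto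
            then show ?thesis
              by (intro exI[of _ "N x"] exI[of _ "N (Conj (N x) (N x))"]) (simp add: N_def x_def std_imp_def std_conj_def)
          qed
        qed
      qed
    qed
  qed
qed


lemma imp_lt1: "0 \<le> w \<Longrightarrow> u \<le> 1 \<Longrightarrow> w < u \<Longrightarrow> std_imp u w < 1"
  by (auto simp: std_imp_def)

lemma cnt_le1: assumes ji: "join_irreducible n (cls n g)" and g: "g \<in> Fm n"
  shows "cnt n g \<le> 1"
proof -
  have "\<forall>\<mu>1\<in>cset n g. \<forall>\<mu>2\<in>cset n g. \<mu>1 = \<mu>2"
  proof (intro ballI, rule ccontr)
    fix \<mu>1 \<mu>2 assume m1: "\<mu>1 \<in> cset n g" and m2: "\<mu>2 \<in> cset n g" and ne: "\<mu>1 \<noteq> \<mu>2"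
    have P1: "\<mu>1 \<in> {..<n} \<rightarrow>\<^sub>E {0, 1/2, 1}" and P2: "\<mu>2 \<in> {..<n} \<rightarrow>\<^sub>E {0, 1/2, 1}"
      and e1: "eval_std \<mu>1 g = 1" and e2: "eval_std \<mu>2 g = 1" using m1 m2 unfolding cset_def by auto
    obtain i where i: "i < n" and d: "\<mu>1 i \<noteq> \<mu>2 i" using ne PiE_ext[OF P1 P2] by blast
    have a: "\<mu>1 i \<in> {0, 1/2, 1}" and c: "\<mu>2 i \<in> {0, 1/2, 1}" using P1 P2 i by (auto simp: PiE_def Pi_def)
    obtain p q where vp: "vars p \<subseteq> {i}" and vq: "vars q \<subseteq> {i}"
      and sc: "\<forall>\<mu>. \<mu> i = \<mu>2 i \<longrightarrow> eval_std \<mu> q < eval_std \<mu> p"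
      and sa: "\<forall>\<mu>. \<mu> i = \<mu>1 i \<longrightarrow> eval_std \<mu> p < eval_std \<mu> q"
      using sep[OF a c d] by blast
    have p: "p \<in> Fm n" and q: "q \<in> Fm n" using vp vq i by (auto simp: Fm_def)
    have Q1: "\<And>j. j < n \<Longrightarrow> \<mu>1 j \<in> Qn n" and Q2: "\<And>j. j < n \<Longrightarrow> \<mu>2 j \<in> Qn n"
      using P3_Q P1 P2 by auto
    from split_JI[OF ji g p q] show False
    proof
      assume ag: "agree n g (And g (Imp p q))"
      have "eval_std \<mu>2 g = eval_std \<mu>2 (And g (Imp p q))"
        using agree_at[of n g "And g (Imp p q)" \<mu>2] ag g p q Q2 by simp
      moreover have "std_imp (eval_std \<mu>2 p) (eval_std \<mu>2 q) < 1"
      proof -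
        have "0 \<le> eval_std \<mu>2 q" "eval_std \<mu>2 p \<le> 1"
          using eval01[of p n \<mu>2] eval01[of q n \<mu>2] p q Q2 by auto
        then show ?thesis using imp_lt1 sc by blast
      qed
      ultimately show False using e2 by simp
    next
      assume ag: "agree n g (And g (Imp q p))"
      have "eval_std \<mu>1 g = eval_std \<mu>1 (And g (Imp q p))"
        using agree_at[of n g "And g (Imp q p)" \<mu>1] ag g p q Q1 by simp
      moreover have "std_imp (eval_std \<mu>1 q) (eval_std \<mu>1 p) < 1"
      proof -
        have "0 \<le> eval_std \<mu>1 p" "eval_std \<mu>1 q \<le> 1"
          using eval01[of p n \<mu>1] eval01[of q n \<mu>1] p q Q1 by auto
        then show ?thesis using imp_lt1 sa by blast
      qed
      ultimately show False using e1 by simp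
    qed
  qed
  then show ?thesis unfolding cnt_def using card_le_Suc0_iff_eq[OF cset_fin] by simp
qed

lemma idem_iff: assumes g: "g \<in> Fm n"
  shows "idempotent_cls n (cls n g) \<longleftrightarrow> agree n (Conj g g) g"
proof
  assume "idempotent_cls n (cls n g)"
  then obtain \<phi> where p: "\<phi> \<in> Fm n" and e: "cls n g = cls n \<phi>" and c: "cls n (Conj \<phi> \<phi>) = cls n g"
    unfolding idempotent_cls_def by blast
  have a1: "agree n g \<phi>" using e cls_eq g p by simp
  have a2: "agree n (Conj \<phi> \<phi>) g" using c cls_eq g p by simp
  show "agree n (Conj g g) g" using a1 a2 unfolding agree_def by auto
next
  assume "agree n (Conj g g) g"
  then have "cls n (Conj g g) = cls n g" using cls_eq g by simp
  then show "idempotent_cls n (cls n g)" unfolding idempotent_cls_def using g by blast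
qed

definition rnd :: "real \<Rightarrow> real" where
  "rnd x = (if x > 1/2 then 1 else if x = 1/2 then 1/2 else 0)"

lemma eval_range: "(\<And>i. 0 \<le> \<mu> i \<and> \<mu> i \<le> 1) \<Longrightarrow> 0 \<le> eval_std \<mu> \<phi> \<and> eval_std \<mu> \<phi> \<le> 1"
  by (induction \<phi>) (auto simp: std_conj_def std_imp_def)

lemma rnd_min: "rnd (min x y) = min (rnd x) (rnd y)" by (auto simp: rnd_def min_def)
lemma rnd_max: "rnd (max x y) = max (rnd x) (rnd y)" by (auto simp: rnd_def max_def)
lemma rnd_conj: "0 \<le> x \<Longrightarrow> x \<le> 1 \<Longrightarrow> 0 \<le> y \<Longrightarrow> y \<le> 1 \<Longrightarrow> rnd (std_conj x y) = std_conj (rnd x) (rnd y)"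
  by (auto simp: rnd_def std_conj_def min_def)
lemma rnd_imp: "0 \<le> x \<Longrightarrow> x \<le> 1 \<Longrightarrow> 0 \<le> y \<Longrightarrow> y \<le> 1 \<Longrightarrow> rnd (std_imp x y) = std_imp (rnd x) (rnd y)"
  by (auto simp: rnd_def std_imp_def max_def)

lemma eval_rnd: assumes r: "\<And>i. 0 \<le> \<mu> i \<and> \<mu> i \<le> 1"
  shows "eval_std (\<lambda>i. rnd (\<mu> i)) \<phi> = rnd (eval_std \<mu> \<phi>)"
proof (induction \<phi>)
  case (Conj a b) then show ?case using eval_range[OF r] by (simp add: rnd_conj)
next
  case (Imp a b) then show ?case using eval_range[OF r] by (simp add: rnd_imp)
qed (auto simp: rnd_def rnd_min rnd_max min_def max_def)


lemma agree_sym: "agree n a b \<Longrightarrow> agree n b a" unfolding agree_def by auto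

lemma allQ_01: "\<forall>i. \<mu> i \<in> Qn n \<Longrightarrow> 0 \<le> \<mu> i \<and> \<mu> i \<le> 1" using Qn_01 by blast

lemma cnt_idem: assumes ji: "join_irreducible n (cls n g)" and g: "g \<in> Fm n"
  and id: "idempotent_cls n (cls n g)" shows "1 \<le> cnt n g"
proof -
  have gb: "cls n g \<noteq> cls n Bot" using ji unfolding join_irreducible_def by blast
  then have "\<not> agree n g Bot" using cls_eq g by simp
  then obtain \<mu> where mu: "\<forall>i. \<mu> i \<in> Qn n" and ne: "eval_std \<mu> g \<noteq> 0"
    unfolding agree_def by auto
  have ag: "agree n (Conj g g) g" using idem_iff g id by simp
  define a where "a = eval_std \<mu> g"
  have "std_conj a a = a" using ag mu unfolding agree_def a_def by auto
  moreover have "a \<noteq> 0" using ne a_def by simp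
  ultimately have a_gt: "a > 1/2" unfolding std_conj_def by (auto split: if_splits)
  have r01: "\<And>i. 0 \<le> \<mu> i \<and> \<mu> i \<le> 1" using allQ_01[OF mu] .
  define \<rho> where "\<rho> = restrict (\<lambda>i. rnd (\<mu> i)) {..<n}"
  have rP: "\<rho> \<in> {..<n} \<rightarrow>\<^sub>E {0, 1/2, 1}" unfolding \<rho>_def by (auto simp: rnd_def)
  have "eval_std \<rho> g = eval_std (\<lambda>i. rnd (\<mu> i)) g"
    using g by (intro eval_std_cong) (auto simp: \<rho>_def Fm_def)
  also have "\<dots> = rnd a" unfolding a_def by (rule eval_rnd[OF r01])
  also have "\<dots> = 1" using a_gt by (simp add: rnd_def)
  finally have "\<rho> \<in> cset n g" unfolding cset_def using rP by simp
  then have "cset n g \<noteq> {}" by blast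
  then show ?thesis unfolding cnt_def using cset_fin
    by (simp add: Suc_le_eq card_gt_0_iff)
qed

lemma cnt_nidem: assumes ji: "join_irreducible n (cls n g)" and g: "g \<in> Fm n"
  and nid: "\<not> idempotent_cls n (cls n g)" shows "cnt n g = 0"
proof (rule ccontr)
  assume "cnt n g \<noteq> 0"
  then obtain \<mu>0 where m0: "\<mu>0 \<in> cset n g" unfolding cnt_def using cset_fin
    by (metis card.empty equals0I)
  have P0: "\<mu>0 \<in> {..<n} \<rightarrow>\<^sub>E {0, 1/2, 1}" and e0: "eval_std \<mu>0 g = 1" using m0 unfolding cset_def by auto
  have Q0: "\<And>j. j < n \<Longrightarrow> \<mu>0 j \<in> Qn n" using P3_Q P0 by auto
  have "\<not> agree n (Conj g g) g" using idem_iff g nid by simp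
  then obtain \<nu> where nu: "\<forall>i. \<nu> i \<in> Qn n" and ne: "std_conj (eval_std \<nu> g) (eval_std \<nu> g) \<noteq> eval_std \<nu> g"
    unfolding agree_def by auto
  define b where "b = eval_std \<nu> g"
  have b01: "0 \<le> b \<and> b \<le> 1" unfolding b_def using eval01[of g n \<nu>] g nu by auto
  have bc: "std_conj b b \<noteq> b" using ne b_def by simp
  then have b0: "b \<noteq> 0" and bh: "\<not> b + b > 1" unfolding std_conj_def by (auto split: if_splits)
  define s where "s = Conj g g"
  define p where "p = Imp s Bot"
  have s: "s \<in> Fm n" and p: "p \<in> Fm n" using g by (simp_all add: s_def p_def)
  from split_JI[OF ji g p s] show False
  proof
    assume ag: "agree n g (And g (Imp p s))"
    have "eval_std \<nu> g = eval_std \<nu> (And g (Imp p s))" using ag nu unfolding agree_def by blast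
    moreover have "eval_std \<nu> s = 0" unfolding s_def using bh b_def by (simp add: std_conj_def)
    ultimately have "b = min b 0" unfolding p_def b_def by (simp add: std_imp_def)
    then show False using b0 b01 by simp
  next
    assume ag: "agree n g (And g (Imp s p))"
    have "eval_std \<mu>0 g = eval_std \<mu>0 (And g (Imp s p))"
      using agree_at[of n g "And g (Imp s p)" \<mu>0] ag g s p Q0 by simp
    moreover have "eval_std \<mu>0 s = 1" unfolding s_def using e0 by (simp add: std_conj_def)
    ultimately show False using e0 unfolding p_def by (simp add: std_imp_def)
  qed
qed

lemma fv_JI: assumes ji: "join_irreducible n X"
  shows "fv n X = (if idempotent_cls n X then 1 else 0)"
proof -
  obtain g where g: "g \<in> Fm n" and X: "X = cls n g" using ji unfolding join_irreducible_def NM_free_def by blast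
  show ?thesis
  proof (cases "idempotent_cls n X")
    case True
    then have "cnt n g = 1" using cnt_idem cnt_le1 ji g X by (metis le_antisym)
    then show ?thesis using True fv_cls g X by simp
  next
    case False
    then have "cnt n g = 0" using cnt_nidem ji g X by blast
    then show ?thesis using False fv_cls g X by simp
  qed
qed

definition PP :: "nat \<Rightarrow> (form set \<Rightarrow> real) \<Rightarrow> bool" where
  "PP n \<nu> \<longleftrightarrow> is_valuation n \<nu> \<and> \<nu> (cls n Bot) = 0 \<and>
       (\<forall>X. join_irreducible n X \<longrightarrow> \<nu> X = (if idempotent_cls n X then 1 else 0)) \<and>
       (\<forall>X. X \<notin> NM_free n \<longrightarrow> \<nu> X = 0)"

lemma PP_fv: "PP n (fv n)"
  unfolding PP_def using fv_valuation fv_bot fv_JI by (simp add: fv_def)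

definition dm :: "nat \<Rightarrow> form \<Rightarrow> nat" where
  "dm n \<phi> = card (SIGMA \<mu>:({..<n} \<rightarrow>\<^sub>E Qn n). {q \<in> Qn n. q \<le> eval_std \<mu> \<phi>})"

lemma dm_less: assumes p: "\<phi> \<in> Fm n" and q: "\<psi> \<in> Fm n"
  and le: "\<And>\<mu>. \<mu> \<in> {..<n} \<rightarrow>\<^sub>E Qn n \<Longrightarrow> eval_std \<mu> \<psi> \<le> eval_std \<mu> \<phi>"
  and na: "\<not> agree n \<psi> \<phi>"
  shows "dm n \<psi> < dm n \<phi>"
proof -
  obtain \<mu>0 where m0: "\<mu>0 \<in> {..<n} \<rightarrow>\<^sub>E Qn n" and ne: "eval_std \<mu>0 \<psi> \<noteq> eval_std \<mu>0 \<phi>"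
    using na agree_T[OF q p] by blast
  have lt: "eval_std \<mu>0 \<psi> < eval_std \<mu>0 \<phi>" using le[OF m0] ne by simp
  have eQ: "eval_std \<mu>0 \<phi> \<in> Qn n" using p m0 by (intro eval_Qn) (auto simp: Fm_def PiE_def Pi_def)
  have fin: "finite (SIGMA \<mu>:({..<n} \<rightarrow>\<^sub>E Qn n). {q \<in> Qn n. q \<le> eval_std \<mu> \<phi>})"
    using Qn_fin by (intro finite_SigmaI finite_PiE) auto
  have "(SIGMA \<mu>:({..<n} \<rightarrow>\<^sub>E Qn n). {q \<in> Qn n. q \<le> eval_std \<mu> \<psi>}) \<subset>
        (SIGMA \<mu>:({..<n} \<rightarrow>\<^sub>E Qn n). {q \<in> Qn n. q \<le> eval_std \<mu> \<phi>})"
  proof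
    show "(SIGMA \<mu>:({..<n} \<rightarrow>\<^sub>E Qn n). {q \<in> Qn n. q \<le> eval_std \<mu> \<psi>}) \<subseteq>
        (SIGMA \<mu>:({..<n} \<rightarrow>\<^sub>E Qn n). {q \<in> Qn n. q \<le> eval_std \<mu> \<phi>})"
      using le by (auto intro: order_trans)
    have "(\<mu>0, eval_std \<mu>0 \<phi>) \<in> (SIGMA \<mu>:({..<n} \<rightarrow>\<^sub>E Qn n). {q \<in> Qn n. q \<le> eval_std \<mu> \<phi>})"
      using m0 eQ by simp
    moreover have "(\<mu>0, eval_std \<mu>0 \<phi>) \<notin> (SIGMA \<mu>:({..<n} \<rightarrow>\<^sub>E Qn n). {q \<in> Qn n. q \<le> eval_std \<mu> \<psi>})"
      using lt by simp
    ultimately show "(SIGMA \<mu>:({..<n} \<rightarrow>\<^sub>E Qn n). {q \<in> Qn n. q \<le> eval_std \<mu> \<psi>}) \<noteq>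
        (SIGMA \<mu>:({..<n} \<rightarrow>\<^sub>E Qn n). {q \<in> Qn n. q \<le> eval_std \<mu> \<phi>})" by blast
  qed
  then show ?thesis unfolding dm_def using fin by (simp add: psubset_card_mono)
qed

lemma uniq_cls: assumes P: "PP n \<nu>" shows "\<phi> \<in> Fm n \<Longrightarrow> \<nu> (cls n \<phi>) = fv n (cls n \<phi>)"
proof (induction "dm n \<phi>" arbitrary: \<phi> rule: less_induct)
  case less
  note p = less.prems
  have val: "is_valuation n \<nu>" and bot: "\<nu> (cls n Bot) = 0"
    and jiv: "\<And>X. join_irreducible n X \<Longrightarrow> \<nu> X = (if idempotent_cls n X then 1 else 0)"
    using P unfolding PP_def by auto
  show ?case
  proof (cases "cls n \<phi> = cls n Bot")
    case True then show ?thesis using bot fv_bot by simp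
  next
    case nb: False
    show ?thesis
    proof (cases "join_irreducible n (cls n \<phi>)")
      case True then show ?thesis using jiv fv_JI by simp
    next
      case False
      have mem: "cls n \<phi> \<in> NM_free n" using p unfolding NM_free_def by blast
      then obtain \<psi> \<chi> where ps: "\<psi> \<in> Fm n" and ch: "\<chi> \<in> Fm n" and e: "cls n \<phi> = cls n (Or \<psi> \<chi>)"
        and n1: "cls n \<phi> \<noteq> cls n \<psi>" and n2: "cls n \<phi> \<noteq> cls n \<chi>"
        using False nb unfolding join_irreducible_def by blast
      have aO: "agree n \<phi> (Or \<psi> \<chi>)" using e cls_eq p ps ch by simp
      have eqT: "\<And>\<mu>. \<mu> \<in> {..<n} \<rightarrow>\<^sub>E Qn n \<Longrightarrow> eval_std \<mu> \<phi> = max (eval_std \<mu> \<psi>) (eval_std \<mu> \<chi>)"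
        using aO agree_T[of \<phi> n "Or \<psi> \<chi>"] p ps ch by simp
      have na1: "\<not> agree n \<psi> \<phi>" using n1 cls_eq[OF p ps] agree_sym by blast
      have na2: "\<not> agree n \<chi> \<phi>" using n2 cls_eq[OF p ch] agree_sym by blast
      have d1: "dm n \<psi> < dm n \<phi>" using dm_less[OF p ps _ na1] eqT by simp
      have d2: "dm n \<chi> < dm n \<phi>" using dm_less[OF p ch _ na2] eqT by simp
      have na3: "\<not> agree n (And \<psi> \<chi>) \<phi>"
      proof
        assume a3: "agree n (And \<psi> \<chi>) \<phi>"
        have "\<forall>\<mu> \<in> {..<n} \<rightarrow>\<^sub>E Qn n. eval_std \<mu> \<psi> = eval_std \<mu> \<phi>"
        proof
          fix \<mu> assume m: "\<mu> \<in> {..<n} \<rightarrow>\<^sub>E Qn n"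
          have "min (eval_std \<mu> \<psi>) (eval_std \<mu> \<chi>) = eval_std \<mu> \<phi>"
            using a3 agree_T[of "And \<psi> \<chi>" n \<phi>] p ps ch m by simp
          then show "eval_std \<mu> \<psi> = eval_std \<mu> \<phi>" using eqT[OF m] by linarith
        qed
        then show False using na1 agree_T[OF ps p] by simp
      qed
      have d3: "dm n (And \<psi> \<chi>) < dm n \<phi>" using dm_less[OF p _ _ na3] eqT ps ch by simp
      have ih1: "\<nu> (cls n \<psi>) = fv n (cls n \<psi>)" using less.hyps[OF d1 ps] .
      have ih2: "\<nu> (cls n \<chi>) = fv n (cls n \<chi>)" using less.hyps[OF d2 ch] .
      have ih3: "\<nu> (cls n (And \<psi> \<chi>)) = fv n (cls n (And \<psi> \<chi>))" using less.hyps[OF d3] ps ch by simp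
      have v1: "\<nu> (cls n \<psi>) + \<nu> (cls n \<chi>) = \<nu> (cls n (Or \<psi> \<chi>)) + \<nu> (cls n (And \<psi> \<chi>))"
        using val ps ch unfolding is_valuation_def by blast
      have v2: "fv n (cls n \<psi>) + fv n (cls n \<chi>) = fv n (cls n (Or \<psi> \<chi>)) + fv n (cls n (And \<psi> \<chi>))"
        using fv_valuation ps ch unfolding is_valuation_def by blast
      show ?thesis using v1 v2 ih1 ih2 ih3 e by simp
    qed
  qed
qed

lemma uniq: assumes P: "PP n \<nu>" shows "\<nu> = fv n"
proof
  fix X show "\<nu> X = fv n X"
  proof (cases "X \<in> NM_free n")
    case True
    then obtain \<phi> where "\<phi> \<in> Fm n" "X = cls n \<phi>" unfolding NM_free_def by blast
    then show ?thesis using uniq_cls[OF P] by simp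
  next
    case False then show ?thesis using P unfolding PP_def fv_def by simp
  qed
qed

theorem theorem5:
  fixes n :: nat and \<phi> :: form
  assumes "n \<ge> 1" and "\<phi> \<in> Fm n"
  shows "chi_plus n (cls n \<phi>) =
    real (card {\<mu> \<in> {..<n} \<rightarrow>\<^sub>E {0, 1/2, 1}. eval_std \<mu> \<phi> = 1})"
proof -
  have "chi_plus n = fv n"
    unfolding chi_plus_def using PP_fv[of n] uniq[of n] unfolding PP_def
    by (intro the_equality) blast+
  then show ?thesis using fv_cls[OF assms(2)] unfolding cnt_def cset_def by simp
qed


end
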